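(* For all $r\ge0$ and $2\le n\le\infty$, a morphism $f\colon A\to B$ of $n$-multicomplexes has the right lifting property with respect to every morphism in $I^n_r$ if and only if $f$ is an $E_r$-quasi-isomorphism and $f$ has the right lifting property with respect to every morphism in $J^n_0\cup J^n_r$. In other words, $I^n_r\text{-inj}=\mathcal E^n_r\cap J^n_0\text{-inj}\cap J^n_r\text{-inj}$.
   Context: Throughout, $R$ is a commutative unital ring. For $1\le n\le\infty$, an $n$-multicomplex is a $\mathbb Z\times\mathbb Z$-bigraded $R$-module $A=\{A^{p,q}\}$ with $R$-linear maps $d_i\colon A\to A$ ($i\ge0$) of bidegree $(-i,1-i)$ such that $\sum_{i+j=l}(-1)^id_id_j=0$ for all $l\ge0$, and $d_i=0$ for all $i\ge n$. Morphisms are bidegree $(0,0)$ maps commuting with all $d_i$; category $\mathrm{Ch}_n$. For a set $S$ of morphisms, $S$-inj is the class of morphisms with the right lifting property with respect to all of $S$. Spectral sequence: $Z_0^{p,q}(A)=A^{p,q}$; for $r\ge1$, $Z_r^{p,q}(A)$ is the set of $a_0\in A^{p,q}$ for which there exist $a_j\in A^{p-j,q-j}$ ($1\le j\le r-1$) with $\sum_{i+j=l}(-1)^id_ia_j=0$ for $0\le l\le r-1$. $B_0=0$, $B_1^{p,q}(A)=A^{p,q}\cap\operatorname{im}d_0$, and for $r\ge2$, $B_r^{p,q}(A)$ is the set of $x\in A^{p,q}$ for which there exist $b_i\in A^{p+r-1-i,q+r-2-i}$ ($0\le i\le r-1$) with $x=\sum_{i=0}^{r-1}(-1)^id_ib_{r-1-i}$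 and $\sum_{i=0}^l(-1)^id_ib_{l-i}=0$ for $0\le l\le r-2$. $E_r^{p,q}(A)=Z_r^{p,q}(A)/B_r^{p,q}(A)$, the spectral sequence of the column-filtered total complex. A morphism $f$ is an $E_r$-quasi-isomorphism if $E_{r+1}(f)$ is an isomorphism; $\mathcal E^n_r$ denotes the class of these in $\mathrm{Ch}_n$. Representing objects: $\mathbb D^n(p,q)$ is the free $n$-multicomplex on one generator in bidegree $(p,q)$. $\mathcal ZW^n_0(p,q)=\mathbb D^n(p,q)$ with generator $a_0$. $\mathcal ZW^n_1(p,q)$ is the pushout in $\mathrm{Ch}_n$ of $0\leftarrow\mathbb D^n(p,q+1)\to\mathbb D^n(p,q)$, the right map sending the generator to $d_0a_0$. For $r\ge2$, $\mathcal ZW^n_r(p,q)$ is the pushout in $\mathrm{Ch}_n$ of $\mathcal ZW^n_{r-1}(p,q)\leftarrow\mathbb D^n(p-r+1,q-r+2)\to\mathbb D^n(p-r+1,q-r+1)$, where, writing $x$ for the generator of the middle object and $a_{r-1}$ for that of the right one, the left map sends $x\mapsto\sum_{i=1}^{r-1}(-1)^{i+1}d_ia_{r-1-i}$ and the right map sends $x\mapsto d_0a_{r-1}$; images of $a_0,\dots,a_{r-1}$ keep their names ($a_i$ in bidegree $(p-i,q-i)$). $\mathcal BW^n_0(p,q-1)=0$, $\mathcal BW^n_1(p,q-1)=\mathbb D^n(p,q-1)$, and for $r\ge2$, $\mathcal BW^n_r(p,q-1)=\mathcal ZW^n_{r-1}(p+r-1,q+r-2)\oplus\mathbb D^n(p,q-1)\oplus\mathcal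 ZW^n_{r-1}(p-1,q-1)$. The morphism $\iota_r\colon\mathcal ZW^n_r(p,q)\to\mathcal BW^n_r(p,q-1)$: $\iota_0=0$; $\iota_1(a_0)=d_0e$ where $e$ generates $\mathbb D^n(p,q-1)$; for $r\ge2$, writing $b_0,\dots,b_{r-2}$, $e$, $c_0,\dots,c_{r-2}$ for the generators of the three summands, $\iota_r(a_j)=d_je+(-1)^j\sum_{i=j+1}^{r+j-1}(-1)^id_ib_{r+j-1-i}+c_{j-1}$ ($0\le j\le r-1$, $c_{-1}:=0$). Generating sets: $I^n_r=\{\iota_{r+1}\colon\mathcal ZW^n_{r+1}(p,q)\to\mathcal BW^n_{r+1}(p,q-1)\}_{p,q\in\mathbb Z}$ and $J^n_r=\{0\to\mathcal ZW^n_r(p,q)\}_{p,q\in\mathbb Z}$. *)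

theory Defs
  imports Main "HOL-Library.Extended_Nat"
begin

text \<open>A bigraded R-module is given by its homogeneous components comp A p q,
  each a submodule of an ambient abelian group, with scalar action sc A.  Only homogeneous data is ever used.\<close>

record ('r, 'a) mcx =
  comp :: "int \<Rightarrow> int \<Rightarrow> 'a set"
  sc   :: "'r \<Rightarrow> 'a \<Rightarrow> 'a"
  dd   :: "nat \<Rightarrow> 'a \<Rightarrow> 'a"

definition sg :: "nat \<Rightarrow> 'a::ab_group_add \<Rightarrow> 'a" where
  "sg i x = (if even i then x else - x)"

definition is_mc :: "enat \<Rightarrow> ('r::comm_ring_1, 'a::ab_group_add) mcx \<Rightarrow> bool" where
  "is_mc n A \<longleftrightarrow>
     (\<forall>p q. 0 \<in> comp A p q
        \<and> (\<forall>x\<in>comp A p q. \<forall>y\<in>comp A p q. x + y \<in> comp A p q)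
        \<and> (\<forall>x\<in>comp A p q. - x \<in> comp A p q)
        \<and> (\<forall>c. \<forall>x\<in>comp A p q. sc A c x \<in> comp A p q)
        \<and> (\<forall>c. \<forall>x\<in>comp A p q. \<forall>y\<in>comp A p q. sc A c (x + y) = sc A c x + sc A c y)
        \<and> (\<forall>c c'. \<forall>x\<in>comp A p q. sc A (c + c') x = sc A c x + sc A c' x)
        \<and> (\<forall>c c'. \<forall>x\<in>comp A p q. sc A (c * c') x = sc A c (sc A c' x))
        \<and> (\<forall>x\<in>comp A p q. sc A 1 x = x)
        \<and> (\<forall>i. \<forall>x\<in>comp A p q. dd A i x \<in> comp A (p - int i) (q + 1 - int i))
        \<and> (\<forall>i. \<forall>x\<in>comp A p q. \<forall>y\<in>comp A p q. dd A i (x + y) = dd A i x + dd A i y)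
        \<and> (\<forall>i c. \<forall>x\<in>comp A p q. dd A i (sc A c x) = sc A c (dd A i x))
        \<and> (\<forall>l. \<forall>x\<in>comp A p q. (\<Sum>i\<le>l. sg i (dd A i (dd A (l - i) x))) = 0)
        \<and> (\<forall>i. n \<le> enat i \<longrightarrow> (\<forall>x\<in>comp A p q. dd A i x = 0)))"

definition mc_hom :: "('r::comm_ring_1, 'a::ab_group_add) mcx \<Rightarrow> ('r, 'b::ab_group_add) mcx
    \<Rightarrow> ('a \<Rightarrow> 'b) \<Rightarrow> bool" where
  "mc_hom A B f \<longleftrightarrow>
     (\<forall>p q. \<forall>x\<in>comp A p q. f x \<in> comp B p q
        \<and> (\<forall>y\<in>comp A p q. f (x + y) = f x + f y)
        \<and> (\<forall>c. f (sc A c x) = sc B c (f x))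
        \<and> (\<forall>i. f (dd A i x) = dd B i (f x)))"

definition Zset :: "('r::comm_ring_1, 'a::ab_group_add) mcx \<Rightarrow> nat \<Rightarrow> int \<Rightarrow> int \<Rightarrow> 'a set" where
  "Zset A r p q = {a0. a0 \<in> comp A p q \<and>
     (\<exists>a :: nat \<Rightarrow> 'a. a 0 = a0
        \<and> (\<forall>j. 1 \<le> j \<and> j < r \<longrightarrow> a j \<in> comp A (p - int j) (q - int j))
        \<and> (\<forall>l<r. (\<Sum>i\<le>l. sg i (dd A i (a (l - i)))) = 0))}"

text \<open>For r = 0 this gives 0, for r = 1 it gives A^{p,q} \<inter> im d_0, and for r \<ge> 2 the
  set from the paper.\<close>
definition Bset :: "('r::comm_ring_1, 'a::ab_group_add) mcx \<Rightarrow> nat \<Rightarrow> int \<Rightarrow> int \<Rightarrow> 'a set" where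
  "Bset A r p q = {x. \<exists>b :: nat \<Rightarrow> 'a.
        (\<forall>i<r. b i \<in> comp A (p + int r - 1 - int i) (q + int r - 2 - int i))
      \<and> x = (\<Sum>i<r. sg i (dd A i (b (r - 1 - i))))
      \<and> (\<forall>l. l + 2 \<le> r \<longrightarrow> (\<Sum>i\<le>l. sg i (dd A i (b (l - i)))) = 0)}"

definition coset_of :: "('r::comm_ring_1, 'a::ab_group_add) mcx \<Rightarrow> nat \<Rightarrow> int \<Rightarrow> int \<Rightarrow> 'a \<Rightarrow> 'a set" where
  "coset_of A r p q z = {z + b | b. b \<in> Bset A r p q}"

definition Eset :: "('r::comm_ring_1, 'a::ab_group_add) mcx \<Rightarrow> nat \<Rightarrow> int \<Rightarrow> int \<Rightarrow> 'a set set" where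
  "Eset A r p q = coset_of A r p q ` Zset A r p q"

definition Emap :: "('r::comm_ring_1, 'a::ab_group_add) mcx \<Rightarrow> ('r, 'b::ab_group_add) mcx
    \<Rightarrow> ('a \<Rightarrow> 'b) \<Rightarrow> nat \<Rightarrow> int \<Rightarrow> int \<Rightarrow> 'a set \<Rightarrow> 'b set" where
  "Emap A B f r p q X = coset_of B r p q
     (f (SOME z. z \<in> Zset A r p q \<and> X = coset_of A r p q z))"

text \<open>f is an E_r-quasi-isomorphism iff E_{r+1}(f) is an isomorphism (in every bidegree).\<close>
definition E_qiso :: "('r::comm_ring_1, 'a::ab_group_add) mcx \<Rightarrow> ('r, 'b::ab_group_add) mcx
    \<Rightarrow> ('a \<Rightarrow> 'b) \<Rightarrow> nat \<Rightarrow> bool" where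
  "E_qiso A B f r \<longleftrightarrow>
     (\<forall>p q. bij_betw (Emap A B f (Suc r) p q) (Eset A (Suc r) p q) (Eset B (Suc r) p q))"

text \<open>A formal expression in the free multicomplex on generators of type 'g:
  an R-linear combination of words d_{i1} ... d_{ik} g.\<close>
type_synonym ('r, 'g) fexpr = "('r \<times> nat list \<times> 'g) list"

record ('r, 'g) pres =
  gens :: "'g set"
  gdeg :: "'g \<Rightarrow> int \<times> int"
  rels :: "('r, 'g) fexpr set"

fun dw :: "('r, 'a) mcx \<Rightarrow> nat list \<Rightarrow> 'a \<Rightarrow> 'a" where
  "dw A [] x = x"
| "dw A (i # w) x = dd A i (dw A w x)"

definition evalx :: "('r::comm_ring_1, 'a::ab_group_add) mcx \<Rightarrow> ('g \<Rightarrow> 'a) \<Rightarrow> ('r, 'g) fexpr \<Rightarrow> 'a" where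
  "evalx A \<alpha> e = sum_list (map (\<lambda>(c, w, g). sc A c (dw A w (\<alpha> g))) e)"

text \<open>Morphisms from the presented n-multicomplex P into A, described by the images of
  the generators (a presented object is the free n-multicomplex on its generators modulo
  the sub-multicomplex generated by its relations).\<close>
definition Hom :: "('r::comm_ring_1, 'g) pres \<Rightarrow> ('r, 'a::ab_group_add) mcx \<Rightarrow> ('g \<Rightarrow> 'a) set" where
  "Hom P A = {\<alpha>. (\<forall>g\<in>gens P. \<alpha> g \<in> comp A (fst (gdeg P g)) (snd (gdeg P g)))
                 \<and> (\<forall>e\<in>rels P. evalx A \<alpha> e = 0)}"

text \<open>Right lifting property of f : A \<rightarrow> B with respect to the morphism P \<rightarrow> Q
  sending each generator g of P to the element \<phi> g of Q.\<close>
definition rlp :: "('r::comm_ring_1, 'a::ab_group_add) mcx \<Rightarrow> ('r, 'b::ab_group_add) mcx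
    \<Rightarrow> ('a \<Rightarrow> 'b) \<Rightarrow> ('r, 'g) pres \<Rightarrow> ('r, 'h) pres \<Rightarrow> ('g \<Rightarrow> ('r, 'h) fexpr) \<Rightarrow> bool" where
  "rlp A B f P Q \<phi> \<longleftrightarrow>
     (\<forall>\<alpha> \<beta>. \<alpha> \<in> Hom P A \<longrightarrow> \<beta> \<in> Hom Q B \<longrightarrow>
        (\<forall>g\<in>gens P. f (\<alpha> g) = evalx B \<beta> (\<phi> g)) \<longrightarrow>
        (\<exists>\<gamma>\<in>Hom Q A. (\<forall>g\<in>gens P. evalx A \<gamma> (\<phi> g) = \<alpha> g)
                     \<and> (\<forall>h\<in>gens Q. f (\<gamma> h) = \<beta> h)))"

definition zrel :: "(nat \<Rightarrow> 'g) \<Rightarrow> nat \<Rightarrow> ('r::comm_ring_1, 'g) fexpr" where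
  "zrel gen k = map (\<lambda>i. ((-1) ^ i, [i], gen (k - i))) [0..<Suc k]"

text \<open>ZW_r(p,q): generators a_j (j < max 1 r) in bidegree (p-j,q-j); relations
  d_0 a_0 = 0 (r \<ge> 1) and d_0 a_k = \<Sum>_{i=1}^k (-1)^{i+1} d_i a_{k-i} (1 \<le> k < r),
  exactly the iterated pushouts of the paper.\<close>
definition ZWp :: "nat \<Rightarrow> int \<Rightarrow> int \<Rightarrow> ('r::comm_ring_1, nat) pres" where
  "ZWp r p q = \<lparr> gens = {..<max 1 r},
                  gdeg = (\<lambda>j. (p - int j, q - int j)),
                  rels = zrel id ` {..<r} \<rparr>"

datatype bwgen = Bg nat | Eg | Cg nat

text \<open>BW_r(p,q') for r \<ge> 1 (here q' = q - 1 is the bidegree of e):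
  ZW_{r-1}(p+r-1,q'+r-1) \<oplus> D(p,q') \<oplus> ZW_{r-1}(p-1,q'); for r = 1 this is D(p,q').\<close>
definition BWp :: "nat \<Rightarrow> int \<Rightarrow> int \<Rightarrow> ('r::comm_ring_1, bwgen) pres" where
  "BWp r p q = \<lparr> gens = {Eg} \<union> Bg ` {..<r - 1} \<union> Cg ` {..<r - 1},
                  gdeg = (\<lambda>g. case g of
                            Bg j \<Rightarrow> (p + int r - 1 - int j, q + int r - 1 - int j)
                          | Eg \<Rightarrow> (p, q)
                          | Cg j \<Rightarrow> (p - 1 - int j, q - int j)),
                  rels = zrel Bg ` {..<r - 1} \<union> zrel Cg ` {..<r - 1} \<rparr>"

definition iota :: "nat \<Rightarrow> nat \<Rightarrow> ('r::comm_ring_1, bwgen) fexpr" where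
  "iota r j = [(1, [j], Eg)]
      @ map (\<lambda>i. ((-1) ^ j * (-1) ^ i, [i], Bg (r + j - 1 - i))) [Suc j..<r + j]
      @ (if j = 0 then [] else [(1, [], Cg (j - 1))])"

definition zero_pres :: "('r, nat) pres" where
  "zero_pres = \<lparr> gens = {}, gdeg = (\<lambda>_. (0, 0)), rels = {} \<rparr>"

definition from_zero :: "nat \<Rightarrow> ('r, 'h) fexpr" where
  "from_zero g = []"

definition I_inj :: "nat \<Rightarrow> ('r::comm_ring_1, 'a::ab_group_add) mcx \<Rightarrow> ('r, 'b::ab_group_add) mcx
    \<Rightarrow> ('a \<Rightarrow> 'b) \<Rightarrow> bool" where
  "I_inj r A B f \<longleftrightarrow>
     (\<forall>p q. rlp A B f (ZWp (Suc r) p q) (BWp (Suc r) p (q - 1)) (iota (Suc r)))"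

definition J_inj :: "nat \<Rightarrow> ('r::comm_ring_1, 'a::ab_group_add) mcx \<Rightarrow> ('r, 'b::ab_group_add) mcx
    \<Rightarrow> ('a \<Rightarrow> 'b) \<Rightarrow> bool" where
  "J_inj r A B f \<longleftrightarrow> (\<forall>p q. rlp A B f zero_pres (ZWp r p q) from_zero)"

end

theory Submission
  imports Defs
begin


lemma sg_0[simp]: "sg 0 x = x" by (simp add: sg_def)
lemma sg_Suc[simp]: "sg (Suc i) x = - sg i x" by (simp add: sg_def)
lemma sg_zero[simp]: "sg i 0 = 0" by (simp add: sg_def)
lemma sg_plus: "sg i (x + y) = sg i x + sg i y" by (simp add: sg_def)
lemma sg_uminus: "sg i (- x) = - sg i x" by (simp add: sg_def)
lemma sg_minus: "sg i (x - y) = sg i x - sg i y" by (simp add: sg_def)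
lemma sg_add: "sg (i + j) x = sg i (sg j x)" by (induct i) (auto simp: sg_uminus)
lemma sg_sg[simp]: "sg i (sg i x) = x" by (simp add: sg_def)
lemma sg_diff: "j \<le> i \<Longrightarrow> sg (i - j) x = sg i (sg j x)"
proof -
  assume "j \<le> i"
  then have "sg i (sg j x) = sg ((i - j) + j) (sg j x)" by simp
  also have "\<dots> = sg (i - j) (sg j (sg j x))" by (rule sg_add)
  finally show ?thesis by simp
qed
lemma sg_sum: "sg i (sum g K) = (\<Sum>k\<in>K. sg i (g k))"
  by (simp add: sg_def sum_negf)

context fixes n :: enat and M :: "('r::comm_ring_1, 'a::ab_group_add) mcx"
  assumes mc: "is_mc n M"
begin

lemma mc_zero[simp]: "0 \<in> comp M p q" using mc by (simp add: is_mc_def)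
lemma mc_add: "x \<in> comp M p q \<Longrightarrow> y \<in> comp M p q \<Longrightarrow> x + y \<in> comp M p q"
  using mc by (simp add: is_mc_def)
lemma mc_neg: "x \<in> comp M p q \<Longrightarrow> - x \<in> comp M p q"
  using mc by (simp add: is_mc_def)
lemma mc_diff: "x \<in> comp M p q \<Longrightarrow> y \<in> comp M p q \<Longrightarrow> x - y \<in> comp M p q"
  unfolding diff_conv_add_uminus by (intro mc_add mc_neg)
lemma mc_sg: "x \<in> comp M p q \<Longrightarrow> sg i x \<in> comp M p q"
  using mc_neg by (simp add: sg_def)
lemma mc_sum: "(\<And>k. k \<in> K \<Longrightarrow> g k \<in> comp M p q) \<Longrightarrow> sum g K \<in> comp M p q"
  by (induct K rule: infinite_finite_induct) (auto intro: mc_add)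
lemma mc_dd: "x \<in> comp M p q \<Longrightarrow> dd M i x \<in> comp M (p - int i) (q + 1 - int i)"
  using mc by (simp add: is_mc_def)
lemma mc_dd': "x \<in> comp M p q \<Longrightarrow> p' = p - int i \<Longrightarrow> q' = q + 1 - int i \<Longrightarrow> dd M i x \<in> comp M p' q'"
  using mc_dd by simp
lemma mc_dd_add: "x \<in> comp M p q \<Longrightarrow> y \<in> comp M p q \<Longrightarrow> dd M i (x + y) = dd M i x + dd M i y"
  using mc by (simp add: is_mc_def)
lemma mc_dd_0[simp]: "dd M i 0 = 0"
proof -
  have "dd M i (0 + 0) = dd M i 0 + dd M i 0" by (rule mc_dd_add[of 0 0 0]) auto
  then show ?thesis by simp
qed
lemma mc_dd_neg: "x \<in> comp M p q \<Longrightarrow> dd M i (- x) = - dd M i x"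
proof -
  assume x: "x \<in> comp M p q"
  have "dd M i (x + - x) = dd M i x + dd M i (- x)" by (rule mc_dd_add[OF x mc_neg[OF x]])
  then have "dd M i x + dd M i (-x) = 0" by simp
  from add.inverse_unique[OF this] show ?thesis by simp
qed
lemma mc_dd_diff: "x \<in> comp M p q \<Longrightarrow> y \<in> comp M p q \<Longrightarrow> dd M i (x - y) = dd M i x - dd M i y"
proof -
  assume x: "x \<in> comp M p q" and y: "y \<in> comp M p q"
  have "dd M i (x - y) = dd M i x + dd M i (- y)" using mc_dd_add[OF x mc_neg[OF y], of i] by simp
  then show ?thesis using mc_dd_neg[OF y, of i] by simp
qed
lemma mc_dd_sg: "x \<in> comp M p q \<Longrightarrow> dd M i (sg k x) = sg k (dd M i x)"
  by (simp add: sg_def mc_dd_neg)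
lemma mc_dd_sum: "(\<And>k. k \<in> K \<Longrightarrow> g k \<in> comp M p q) \<Longrightarrow> dd M i (sum g K) = (\<Sum>k\<in>K. dd M i (g k))"
proof (induct K rule: infinite_finite_induct)
  case (insert x F)
  have c1: "g x \<in> comp M p q" using insert by auto
  have c2: "sum g F \<in> comp M p q" using insert by (intro mc_sum) auto
  note mc_dd_add[OF c1 c2, of i]
  then show ?case using insert by simp
qed auto
lemma mc_rel: "x \<in> comp M p q \<Longrightarrow> (\<Sum>i\<le>l. sg i (dd M i (dd M (l - i) x))) = 0"
proof -
  assume x: "x \<in> comp M p q"
  from mc have "\<forall>l. \<forall>x\<in>comp M p q. (\<Sum>i\<le>l. sg i (dd M i (dd M (l - i) x))) = 0"
    unfolding is_mc_def by blast
  then show ?thesis using x by blast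
qed

lemma mc_sc1: "x \<in> comp M p q \<Longrightarrow> sc M 1 x = x"
  using mc by (simp add: is_mc_def)
lemma mc_sc_addc: "x \<in> comp M p q \<Longrightarrow> sc M (c + c') x = sc M c x + sc M c' x"
  using mc by (simp add: is_mc_def)
lemma mc_sc_mult: "x \<in> comp M p q \<Longrightarrow> sc M (c * c') x = sc M c (sc M c' x)"
  using mc by (simp add: is_mc_def)
lemma mc_sc0: "x \<in> comp M p q \<Longrightarrow> sc M 0 x = 0"
proof -
  assume x: "x \<in> comp M p q"
  have "sc M (0 + 0) x = sc M 0 x + sc M 0 x" by (rule mc_sc_addc[OF x])
  then show ?thesis by simp
qed
lemma mc_sc_m1: "x \<in> comp M p q \<Longrightarrow> sc M (-1) x = - x"
proof -
  assume x: "x \<in> comp M p q"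
  have "sc M (1 + -1) x = sc M 1 x + sc M (-1) x" by (rule mc_sc_addc[OF x])
  then show ?thesis using mc_sc0[OF x] mc_sc1[OF x] by (simp add: eq_neg_iff_add_eq_0 add.commute)
qed
lemma mc_sc_comp: "x \<in> comp M p q \<Longrightarrow> sc M c x \<in> comp M p q"
  using mc by (simp add: is_mc_def)
lemma mc_sc_pow: "x \<in> comp M p q \<Longrightarrow> sc M ((-1) ^ i) x = sg i x"
proof (induct i)
  case 0 then show ?case by (simp add: mc_sc1)
next
  case (Suc i)
  have "sc M ((-1) * (-1) ^ i) x = sc M (-1) (sc M ((-1)^i) x)" by (rule mc_sc_mult[OF Suc(2)])
  also have "\<dots> = - sg i x" using Suc mc_sc_m1[OF mc_sg[OF Suc(2)]] by simp
  finally show ?case by (simp only: power_Suc sg_Suc)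
qed

end



definition Rl :: "('r::comm_ring_1, 'a::ab_group_add) mcx \<Rightarrow> (nat \<Rightarrow> 'a) \<Rightarrow> nat \<Rightarrow> 'a" where
  "Rl M x l = (\<Sum>i\<le>l. sg i (dd M i (x (l - i))))"

definition inT :: "('r::comm_ring_1, 'a::ab_group_add) mcx \<Rightarrow> nat \<Rightarrow> int \<Rightarrow> int \<Rightarrow> (nat \<Rightarrow> 'a) \<Rightarrow> bool" where
  "inT M m P Q x \<longleftrightarrow> (\<forall>k<m. x k \<in> comp M (P - int k) (Q - int k))"

lemma Rl_cong: "(\<And>k. k \<le> l \<Longrightarrow> x k = y k) \<Longrightarrow> Rl M x l = Rl M y l"
  unfolding Rl_def by (intro sum.cong) auto

lemma inT_D: "inT M m P Q x \<Longrightarrow> k < m \<Longrightarrow> x k \<in> comp M (P - int k) (Q - int k)"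
  by (simp add: inT_def)

lemma inT_mono: "inT M m P Q x \<Longrightarrow> m' \<le> m \<Longrightarrow> inT M m' P Q x"
  by (auto simp: inT_def)

context fixes n :: enat and M :: "('r::comm_ring_1, 'a::ab_group_add) mcx"
  assumes mc: "is_mc n M"
begin

lemma Rl_term_comp: "inT M (Suc l) P Q x \<Longrightarrow> i \<le> l \<Longrightarrow>
   sg i (dd M i (x (l - i))) \<in> comp M (P - int l) (Q + 1 - int l)"
proof -
  assume x: "inT M (Suc l) P Q x" and i: "i \<le> l"
  have "x (l - i) \<in> comp M (P - int (l - i)) (Q - int (l - i))" by (rule inT_D[OF x]) simp
  then have d: "dd M i (x (l - i)) \<in> comp M (P - int (l - i) - int i) (Q - int (l - i) + 1 - int i)"
    by (rule mc_dd[OF mc])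
  have e1: "P - int (l - i) - int i = P - int l" and e2: "Q - int (l - i) + 1 - int i = Q + 1 - int l"
    using i by (auto simp: of_nat_diff)
  from d have "dd M i (x (l - i)) \<in> comp M (P - int l) (Q + 1 - int l)" unfolding e1 e2 .
  then show ?thesis by (rule mc_sg[OF mc])
qed

lemma Rl_comp: "inT M (Suc l) P Q x \<Longrightarrow> Rl M x l \<in> comp M (P - int l) (Q + 1 - int l)"
  unfolding Rl_def by (intro mc_sum[OF mc] Rl_term_comp) auto

lemma Rl_add: "inT M (Suc l) P Q x \<Longrightarrow> inT M (Suc l) P Q y \<Longrightarrow>
   Rl M (\<lambda>k. x k + y k) l = Rl M x l + Rl M y l"
  unfolding Rl_def sum.distrib[symmetric]
proof (intro sum.cong refl)
  fix i assume x: "inT M (Suc l) P Q x" and y: "inT M (Suc l) P Q y" and "i \<in> {..l}"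
  have "x (l - i) \<in> comp M (P - int (l - i)) (Q - int (l - i))" by (rule inT_D[OF x]) simp
  moreover have "y (l - i) \<in> comp M (P - int (l - i)) (Q - int (l - i))" by (rule inT_D[OF y]) simp
  ultimately show "sg i (dd M i (x (l - i) + y (l - i))) = sg i (dd M i (x (l - i))) + sg i (dd M i (y (l - i)))"
    by (simp add: mc_dd_add[OF mc] sg_plus)
qed

lemma Rl_neg: "inT M (Suc l) P Q x \<Longrightarrow> Rl M (\<lambda>k. - x k) l = - Rl M x l"
  unfolding Rl_def sum_negf[symmetric]
proof (intro sum.cong refl)
  fix i assume x: "inT M (Suc l) P Q x" and "i \<in> {..l}"
  have "x (l - i) \<in> comp M (P - int (l - i)) (Q - int (l - i))" by (rule inT_D[OF x]) simp
  then show "sg i (dd M i (- x (l - i))) = - sg i (dd M i (x (l - i)))"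
    by (simp add: mc_dd_neg[OF mc] sg_uminus)
qed

lemma inT_add: "inT M m P Q x \<Longrightarrow> inT M m P Q y \<Longrightarrow> inT M m P Q (\<lambda>k. x k + y k)"
  by (auto simp: inT_def intro: mc_add[OF mc])
lemma inT_neg: "inT M m P Q x \<Longrightarrow> inT M m P Q (\<lambda>k. - x k)"
  by (auto simp: inT_def intro: mc_neg[OF mc])
lemma inT_diff: "inT M m P Q x \<Longrightarrow> inT M m P Q y \<Longrightarrow> inT M m P Q (\<lambda>k. x k - y k)"
  by (auto simp: inT_def intro: mc_diff[OF mc])
lemma inT_zero[simp]: "inT M m P Q (\<lambda>k. 0)"
  by (auto simp: inT_def mc_zero[OF mc])

lemma Rl_diff: "inT M (Suc l) P Q x \<Longrightarrow> inT M (Suc l) P Q y \<Longrightarrow>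
   Rl M (\<lambda>k. x k - y k) l = Rl M x l - Rl M y l"
  using Rl_add[of l P Q x "\<lambda>k. - y k"] Rl_neg[of l P Q y] inT_neg[of "Suc l" P Q y]
  by simp

lemma Rl_zero[simp]: "Rl M (\<lambda>k. 0) l = 0"
  by (simp add: Rl_def mc_dd_0[OF mc])

lemma Rl_Suc: "x 0 = 0 \<Longrightarrow> Rl M x (Suc l) = Rl M (\<lambda>k. x (Suc k)) l"
  unfolding Rl_def sum.atMost_Suc
  by (simp add: mc_dd_0[OF mc] Suc_diff_le)

lemma DTD: assumes b: "inT M (Suc L) P Q b"
  shows "Rl M (\<lambda>t. sg t (Rl M b t)) L = 0"
proof -
  define G where "G i k = sg (L + k) (dd M i (dd M k (b (L - i - k))))" for i k
  have step1: "sg i (dd M i (sg (L - i) (Rl M b (L - i)))) = (\<Sum>k\<le>L - i. G i k)" if i: "i \<le> L" for i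
  proof -
    have bi: "inT M (Suc (L - i)) P Q b" using b by (rule inT_mono) simp
    have tc: "\<And>k. k \<in> {..L - i} \<Longrightarrow> sg k (dd M k (b (L - i - k))) \<in> comp M (P - int (L - i)) (Q + 1 - int (L - i))"
      using Rl_term_comp[OF bi] by auto
    have dc: "\<And>k. k \<in> {..L - i} \<Longrightarrow> dd M k (b (L - i - k)) \<in> comp M (P - int (L - i)) (Q + 1 - int (L - i))"
    proof -
      fix k assume "k \<in> {..L - i}"
      then show "dd M k (b (L - i - k)) \<in> comp M (P - int (L - i)) (Q + 1 - int (L - i))"
        using tc[of k] mc_sg[OF mc, of "sg k (dd M k (b (L - i - k)))" _ _ k] by simp
    qed
    have "dd M i (sg (L - i) (Rl M b (L - i))) = sg (L - i) (dd M i (Rl M b (L - i)))"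
      by (rule mc_dd_sg[OF mc Rl_comp[OF bi]])
    also have "dd M i (Rl M b (L - i)) = (\<Sum>k\<le>L - i. dd M i (sg k (dd M k (b (L - i - k)))))"
      unfolding Rl_def by (rule mc_dd_sum[OF mc tc])
    also have "\<dots> = (\<Sum>k\<le>L - i. sg k (dd M i (dd M k (b (L - i - k)))))"
      by (intro sum.cong refl mc_dd_sg[OF mc dc])
    finally have "sg i (dd M i (sg (L - i) (Rl M b (L - i))))
       = (\<Sum>k\<le>L - i. sg i (sg (L - i) (sg k (dd M i (dd M k (b (L - i - k)))))))"
      by (simp add: sg_sum)
    also have "\<dots> = (\<Sum>k\<le>L - i. G i k)"
    proof (intro sum.cong refl)
      fix k
      have "sg i (sg (L - i) (sg k X)) = sg (L + k) X" for X :: 'a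
        using i by (simp add: sg_add[symmetric])
      then show "sg i (sg (L - i) (sg k (dd M i (dd M k (b (L - i - k)))))) = G i k"
        by (simp add: G_def)
    qed
    finally show ?thesis .
  qed
  have "Rl M (\<lambda>t. sg t (Rl M b t)) L = (\<Sum>i\<le>L. \<Sum>k\<le>L - i. G i k)"
    by (simp only: Rl_def[of M "\<lambda>t. sg t (Rl M b t)" L]) (intro sum.cong refl step1, auto)
  also have "\<dots> = (\<Sum>(i, k)\<in>Sigma {..L} (\<lambda>i. {..L - i}). G i k)"
    by (rule sum.Sigma) auto
  also have "Sigma {..L} (\<lambda>i. {..L - i}) = {(i, k). i + k \<le> L}" by auto
  also have "(\<Sum>(i, k)\<in>{(i, k). i + k \<le> L}. G i k) = (\<Sum>t\<le>L. \<Sum>i\<le>t. G i (t - i))"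
    by (rule sum.triangle_reindex_eq)
  also have "\<dots> = (\<Sum>t\<le>L. 0)"
  proof (intro sum.cong refl)
    fix t assume t: "t \<in> {..L}"
    have bt: "b (L - t) \<in> comp M (P - int (L - t)) (Q - int (L - t))" by (rule inT_D[OF b]) simp
    have "(\<Sum>i\<le>t. G i (t - i)) = (\<Sum>i\<le>t. sg (L + t) (sg i (dd M i (dd M (t - i) (b (L - t))))))"
    proof (intro sum.cong refl)
      fix i assume "i \<in> {..t}"
      then have it: "i \<le> t" by simp
      have "sg (L + (t - i)) X = sg (L + t) (sg i X)" for X :: 'a
        using it sg_diff[of i "L + t" X] by (simp add: add_diff_assoc)
      moreover have "L - i - (t - i) = L - t" using it t by simp
      ultimately show "G i (t - i) = sg (L + t) (sg i (dd M i (dd M (t - i) (b (L - t)))))"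
        by (simp add: G_def)
    qed
    also have "\<dots> = sg (L + t) (\<Sum>i\<le>t. sg i (dd M i (dd M (t - i) (b (L - t)))))"
      by (simp add: sg_sum)
    also have "\<dots> = 0" using mc_rel[OF mc bt] by simp
    finally show "(\<Sum>i\<le>t. G i (t - i)) = 0" .
  qed
  finally show ?thesis by simp
qed

end



definition pad :: "nat \<Rightarrow> (nat \<Rightarrow> 'a::zero) \<Rightarrow> nat \<Rightarrow> 'a" where
  "pad c b = (\<lambda>k. if k \<le> c then b k else 0)"

definition yv :: "('r::comm_ring_1, 'a::ab_group_add) mcx \<Rightarrow> nat \<Rightarrow> (nat \<Rightarrow> 'a) \<Rightarrow> nat \<Rightarrow> 'a" where
  "yv M c b = (\<lambda>j. sg j (Rl M (pad c b) (c + j)))"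

lemma sg_comm: "sg i (sg j x) = sg j (sg i x)"
  unfolding sg_add[symmetric] by (simp add: add.commute)

context fixes n :: enat and M :: "('r::comm_ring_1, 'a::ab_group_add) mcx"
  assumes mc: "is_mc n M"
begin

lemma inT_pad: "inT M (Suc c) P Q b \<Longrightarrow> inT M m P Q (pad c b)"
  by (auto simp: inT_def pad_def mc_zero[OF mc])

lemma yv_comp: assumes b: "inT M (Suc c) P Q b"
  shows "yv M c b j \<in> comp M (P - int c - int j) (Q + 1 - int c - int j)"
proof -
  have "Rl M (pad c b) (c + j) \<in> comp M (P - int (c + j)) (Q + 1 - int (c + j))"
    by (rule Rl_comp[OF mc inT_pad[OF b]])
  then show ?thesis unfolding yv_def by (auto intro: mc_sg[OF mc] simp: algebra_simps)
qed

lemma inT_yv: "inT M (Suc c) P Q b \<Longrightarrow> inT M m (P - int c) (Q + 1 - int c) (yv M c b)"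
proof -
  assume b: "inT M (Suc c) P Q b"
  show ?thesis unfolding inT_def
  proof (intro allI impI)
    fix k assume "k < m"
    have e1: "P - int c - int k = P - int c - int k" and e2: "Q + 1 - int c - int k = Q + 1 - int c - int k" by auto
    show "yv M c b k \<in> comp M (P - int c - int k) (Q + 1 - int c - int k)" by (rule yv_comp[OF b])
  qed
qed

lemma yv_0: "yv M c b 0 = Rl M b c"
  unfolding yv_def by (simp, intro Rl_cong) (simp add: pad_def)

lemma yv_rel: assumes b: "inT M (Suc c) P Q b" and rel: "\<And>l. l < c \<Longrightarrow> Rl M b l = 0"
  shows "Rl M (yv M c b) l = 0"
proof -
  define bb where "bb = pad c b"
  define v where "v t = sg t (Rl M bb t)" for t
  have bbT: "\<And>m. inT M m P Q bb" unfolding bb_def by (rule inT_pad[OF b])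
  have vD: "Rl M v L = 0" for L unfolding v_def by (rule DTD[OF mc bbT])
  have v0: "v t = 0" if "t < c" for t
  proof -
    have "Rl M bb t = Rl M b t" unfolding bb_def pad_def using that by (intro Rl_cong) auto
    then show ?thesis using rel[OF that] by (simp add: v_def)
  qed
  have vc: "v t \<in> comp M (P - int t) (Q + 1 - int t)" for t
    unfolding v_def by (rule mc_sg[OF mc Rl_comp[OF mc bbT]])
  have y: "yv M c b j = sg c (v (c + j))" for j
    unfolding yv_def v_def bb_def by (simp add: sg_add)
  have "Rl M v (c + l) = (\<Sum>i\<le>l. sg i (dd M i (v (c + l - i)))) + (\<Sum>i\<in>{Suc l..c + l}. sg i (dd M i (v (c + l - i))))"
  proof -
    have "{..c + l} = {..l} \<union> {Suc l..c + l}" by auto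
    then show ?thesis unfolding Rl_def by (simp add: sum.union_disjoint)
  qed
  also have "(\<Sum>i\<in>{Suc l..c + l}. sg i (dd M i (v (c + l - i)))) = 0"
  proof (intro sum.neutral ballI)
    fix i assume "i \<in> {Suc l..c + l}"
    then have "c + l - i < c" by auto
    then show "sg i (dd M i (v (c + l - i))) = 0" by (simp add: v0 mc_dd_0[OF mc])
  qed
  finally have e: "Rl M v (c + l) = (\<Sum>i\<le>l. sg i (dd M i (v (c + l - i))))" by simp
  have "Rl M (yv M c b) l = (\<Sum>i\<le>l. sg c (sg i (dd M i (v (c + l - i)))))"
    unfolding Rl_def
  proof (intro sum.cong refl)
    fix i assume "i \<in> {..l}"
    then have "c + (l - i) = c + l - i" by simp
    then show "sg i (dd M i (yv M c b (l - i))) = sg c (sg i (dd M i (v (c + l - i))))"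
      unfolding y by (simp add: mc_dd_sg[OF mc vc] sg_comm)
  qed
  also have "\<dots> = sg c (Rl M v (c + l))" unfolding e by (simp add: sg_sum)
  finally show ?thesis using vD by simp
qed

end



section \<open>Morphisms\<close>

context fixes nA nB :: enat and A :: "('r::comm_ring_1, 'a::ab_group_add) mcx"
  and B :: "('r, 'b::ab_group_add) mcx" and f :: "'a \<Rightarrow> 'b"
  assumes mcA: "is_mc nA A" and mcB: "is_mc nB B" and hom: "mc_hom A B f"
begin

lemma hom_comp: "x \<in> comp A p q \<Longrightarrow> f x \<in> comp B p q"
  using hom by (simp add: mc_hom_def)
lemma hom_add: "x \<in> comp A p q \<Longrightarrow> y \<in> comp A p q \<Longrightarrow> f (x + y) = f x + f y"
  using hom by (simp add: mc_hom_def)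
lemma hom_dd: "x \<in> comp A p q \<Longrightarrow> f (dd A i x) = dd B i (f x)"
  using hom by (simp add: mc_hom_def)
lemma hom_zero[simp]: "f 0 = 0"
proof -
  have "f (0 + 0) = f 0 + f 0" by (rule hom_add[of 0 0 0]) (auto simp: mc_zero[OF mcA])
  then show ?thesis by simp
qed
lemma hom_neg: "x \<in> comp A p q \<Longrightarrow> f (- x) = - f x"
proof -
  assume x: "x \<in> comp A p q"
  have "f (x + - x) = f x + f (- x)" by (rule hom_add[OF x mc_neg[OF mcA x]])
  then have "f x + f (- x) = 0" by simp
  from add.inverse_unique[OF this] show ?thesis by simp
qed
lemma hom_diff: "x \<in> comp A p q \<Longrightarrow> y \<in> comp A p q \<Longrightarrow> f (x - y) = f x - f y"
proof -
  assume x: "x \<in> comp A p q" and y: "y \<in> comp A p q"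
  have "f (x - y) = f x + f (- y)" using hom_add[OF x mc_neg[OF mcA y]] by simp
  then show ?thesis using hom_neg[OF y] by simp
qed
lemma hom_sg: "x \<in> comp A p q \<Longrightarrow> f (sg i x) = sg i (f x)"
  by (simp add: sg_def hom_neg)
lemma hom_sum: "(\<And>k. k \<in> K \<Longrightarrow> g k \<in> comp A p q) \<Longrightarrow> f (sum g K) = (\<Sum>k\<in>K. f (g k))"
proof (induct K rule: infinite_finite_induct)
  case (insert x F)
  have c1: "g x \<in> comp A p q" using insert by auto
  have c2: "sum g F \<in> comp A p q" using insert by (intro mc_sum[OF mcA]) auto
  note hom_add[OF c1 c2]
  then show ?case using insert by simp
qed auto

lemma inT_hom: "inT A m P Q x \<Longrightarrow> inT B m P Q (\<lambda>k. f (x k))"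
  by (auto simp: inT_def intro: hom_comp)

lemma hom_Rl: assumes x: "inT A (Suc l) P Q x" shows "f (Rl A x l) = Rl B (\<lambda>k. f (x k)) l"
proof -
  have "f (Rl A x l) = (\<Sum>i\<le>l. f (sg i (dd A i (x (l - i)))))"
    unfolding Rl_def by (rule hom_sum) (rule Rl_term_comp[OF mcA x], simp)
  also have "\<dots> = Rl B (\<lambda>k. f (x k)) l" unfolding Rl_def
  proof (intro sum.cong refl)
    fix i assume "i \<in> {..l}"
    have xi: "x (l - i) \<in> comp A (P - int (l - i)) (Q - int (l - i))" by (rule inT_D[OF x]) simp
    show "f (sg i (dd A i (x (l - i)))) = sg i (dd B i (f (x (l - i))))"
      by (simp add: hom_sg[OF mc_dd[OF mcA xi]] hom_dd[OF xi])
  qed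
  finally show ?thesis .
qed

lemma hom_yv: assumes b: "inT A (Suc c) P Q b"
  shows "f (yv A c b j) = yv B c (\<lambda>k. f (b k)) j"
proof -
  have e: "(\<lambda>k. f (pad c b k)) = pad c (\<lambda>k. f (b k))" by (auto simp: pad_def)
  have "f (yv A c b j) = sg j (f (Rl A (pad c b) (c + j)))"
    unfolding yv_def by (rule hom_sg[OF Rl_comp[OF mcA inT_pad[OF mcA b]]])
  also have "f (Rl A (pad c b) (c + j)) = Rl B (pad c (\<lambda>k. f (b k))) (c + j)"
    using hom_Rl[OF inT_pad[OF mcA b]] e by simp
  finally show ?thesis by (simp add: yv_def)
qed

end

section \<open>Evaluation of formal expressions\<close>

lemma set_upt_Suc0: "set [0..<Suc k] = {..k}" by auto

context fixes n :: enat and M :: "('r::comm_ring_1, 'a::ab_group_add) mcx"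
  assumes mc: "is_mc n M"
begin

lemma evalx_zrel: assumes x: "inT M (Suc k) P Q (\<lambda>j. \<alpha> (gen j))"
  shows "evalx M \<alpha> (zrel gen k) = Rl M (\<lambda>j. \<alpha> (gen j)) k"
proof -
  have "evalx M \<alpha> (zrel gen k) = sum_list (map (\<lambda>i. sc M ((-1) ^ i) (dd M i (\<alpha> (gen (k - i))))) [0..<Suc k])"
    by (simp add: evalx_def zrel_def o_def)
  also have "\<dots> = (\<Sum>i\<le>k. sc M ((-1) ^ i) (dd M i (\<alpha> (gen (k - i)))))"
    by (simp only: sum_set_upt_conv_sum_list_nat[symmetric] set_upt_Suc0)
  also have "\<dots> = Rl M (\<lambda>j. \<alpha> (gen j)) k" unfolding Rl_def
  proof (intro sum.cong refl)
    fix i assume "i \<in> {..k}"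
    have "\<alpha> (gen (k - i)) \<in> comp M (P - int (k - i)) (Q - int (k - i))"
      using inT_D[OF x, of "k - i"] by simp
    then show "sc M ((-1) ^ i) (dd M i (\<alpha> (gen (k - i)))) = sg i (dd M i (\<alpha> (gen (k - i))))"
      by (rule mc_sc_pow[OF mc mc_dd[OF mc]])
  qed
  finally show ?thesis .
qed

end



definition tb :: "nat \<Rightarrow> (bwgen \<Rightarrow> 'a) \<Rightarrow> nat \<Rightarrow> 'a" where
  "tb c \<gamma> = (\<lambda>k. if k < c then \<gamma> (Bg k) else \<gamma> Eg)"

context fixes n :: enat and M :: "('r::comm_ring_1, 'a::ab_group_add) mcx"
  assumes mc: "is_mc n M"
begin

lemma evalx_iota: assumes bt: "inT M (Suc c) P Q (tb c \<gamma>)"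
  and cg: "0 < j \<Longrightarrow> \<gamma> (Cg (j - 1)) \<in> comp M P' Q'"
  shows "evalx M \<gamma> (iota (Suc c) j) = yv M c (tb c \<gamma>) j + (if j = 0 then 0 else \<gamma> (Cg (j - 1)))"
proof -
  define bt where "bt = tb c \<gamma>"
  have btc: "bt c = \<gamma> Eg" by (simp add: bt_def tb_def)
  have btk: "k \<le> c \<Longrightarrow> bt k \<in> comp M (P - int k) (Q - int k)" for k
    using inT_D[OF bt[folded bt_def], of k] by simp
  have E: "\<gamma> Eg \<in> comp M (P - int c) (Q - int c)" using btk[of c] btc by simp
  have ev: "evalx M \<gamma> (iota (Suc c) j) = sc M 1 (dd M j (\<gamma> Eg))
      + sum_list (map (\<lambda>i. sc M ((-1) ^ j * (-1) ^ i) (dd M i (\<gamma> (Bg (Suc c + j - 1 - i))))) [Suc j..<Suc c + j])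
      + (if j = 0 then 0 else sc M 1 (\<gamma> (Cg (j - 1))))"
    by (simp add: evalx_def iota_def o_def)
  have t1: "sc M 1 (dd M j (\<gamma> Eg)) = dd M j (\<gamma> Eg)" by (rule mc_sc1[OF mc mc_dd[OF mc E]])
  have t3: "(if j = 0 then 0 else sc M 1 (\<gamma> (Cg (j - 1)))) = (if j = 0 then 0 else \<gamma> (Cg (j - 1)))"
    using cg mc_sc1[OF mc] by auto
  have t2: "sum_list (map (\<lambda>i. sc M ((-1) ^ j * (-1) ^ i) (dd M i (\<gamma> (Bg (Suc c + j - 1 - i))))) [Suc j..<Suc c + j])
     = (\<Sum>i\<in>{Suc j..<Suc c + j}. sg j (sg i (dd M i (bt (c + j - i)))))"
    unfolding sum_set_upt_conv_sum_list_nat[symmetric] set_upt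
  proof (intro sum.cong refl)
    fix i assume i: "i \<in> {Suc j..<Suc c + j}"
    then have e1: "Suc c + j - 1 - i = c + j - i" and lt: "c + j - i < c" by auto
    then have e2: "bt (c + j - i) = \<gamma> (Bg (c + j - i))" by (simp add: bt_def tb_def)
    have "bt (c + j - i) \<in> comp M (P - int (c + j - i)) (Q - int (c + j - i))" using btk lt by simp
    then have d: "dd M i (bt (c + j - i)) \<in> comp M (P - int (c + j - i) - int i) (Q - int (c + j - i) + 1 - int i)"
      by (rule mc_dd[OF mc])
    have "sc M ((-1) ^ j * (-1) ^ i) (dd M i (bt (c + j - i))) = sg (j + i) (dd M i (bt (c + j - i)))"
      unfolding power_add[symmetric] by (rule mc_sc_pow[OF mc d])
    then show "sc M ((-1) ^ j * (-1) ^ i) (dd M i (\<gamma> (Bg (Suc c + j - 1 - i)))) = sg j (sg i (dd M i (bt (c + j - i))))"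
      by (simp add: e1 e2 sg_add)
  qed
  have "yv M c bt j = sg j (\<Sum>i\<le>c + j. sg i (dd M i (pad c bt (c + j - i))))"
    by (simp add: yv_def Rl_def)
  also have "{..c + j} = {..<j} \<union> ({j} \<union> {Suc j..<Suc c + j})" by auto
  also have "(\<Sum>i\<in>{..<j} \<union> ({j} \<union> {Suc j..<Suc c + j}). sg i (dd M i (pad c bt (c + j - i))))
     = (\<Sum>i\<in>{..<j}. sg i (dd M i (pad c bt (c + j - i)))) + (sg j (dd M j (pad c bt c))
        + (\<Sum>i\<in>{Suc j..<Suc c + j}. sg i (dd M i (pad c bt (c + j - i)))))"
    by (subst sum.union_disjoint, auto)+
  also have "(\<Sum>i\<in>{..<j}. sg i (dd M i (pad c bt (c + j - i)))) = 0"
    by (intro sum.neutral ballI) (auto simp: pad_def mc_dd_0[OF mc])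
  also have "(\<Sum>i\<in>{Suc j..<Suc c + j}. sg i (dd M i (pad c bt (c + j - i))))
     = (\<Sum>i\<in>{Suc j..<Suc c + j}. sg i (dd M i (bt (c + j - i))))"
    by (intro sum.cong refl) (auto simp: pad_def)
  finally have "yv M c bt j = dd M j (\<gamma> Eg) + (\<Sum>i\<in>{Suc j..<Suc c + j}. sg j (sg i (dd M i (bt (c + j - i)))))"
    by (simp add: sg_plus sg_sum pad_def btc)
  then show ?thesis unfolding ev t1 t2 t3 bt_def by simp
qed

end



definition inW :: "('r::comm_ring_1, 'a::ab_group_add) mcx \<Rightarrow> nat \<Rightarrow> int \<Rightarrow> int \<Rightarrow> (nat \<Rightarrow> 'a) \<Rightarrow> bool" where
  "inW M m p q x \<longleftrightarrow> inT M (max 1 m) p q x \<and> (\<forall>l<m. Rl M x l = 0)"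

definition WBt :: "('r::comm_ring_1, 'a::ab_group_add) mcx \<Rightarrow> nat \<Rightarrow> int \<Rightarrow> int \<Rightarrow> (nat \<Rightarrow> 'a) \<Rightarrow> bool" where
  "WBt M c P Q b \<longleftrightarrow> inT M (Suc c) P Q b \<and> (\<forall>l<c. Rl M b l = 0)"

lemma Zset_eq: "Zset M m p q = {x 0 | x. inW M m p q x}"
proof (intro set_eqI iffI)
  fix a0 assume "a0 \<in> Zset M m p q"
  then obtain a where a: "a 0 = a0" "a0 \<in> comp M p q" "\<forall>j. 1 \<le> j \<and> j < m \<longrightarrow> a j \<in> comp M (p - int j) (q - int j)"
    "\<forall>l<m. Rl M a l = 0" unfolding Zset_def Rl_def by blast
  have "inT M (max 1 m) p q a" unfolding inT_def
  proof (intro allI impI)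
    fix k assume "k < max 1 m"
    then show "a k \<in> comp M (p - int k) (q - int k)" using a by (cases k) (auto simp: max_def split: if_splits)
  qed
  then show "a0 \<in> {x 0 | x. inW M m p q x}" using a by (auto simp: inW_def)
next
  fix a0 assume "a0 \<in> {x 0 | x. inW M m p q x}"
  then obtain a where a: "a 0 = a0" "inT M (max 1 m) p q a" "\<forall>l<m. Rl M a l = 0"
    by (auto simp: inW_def)
  have "a0 \<in> comp M p q" using inT_D[OF a(2), of 0] a(1) by simp
  moreover have "\<forall>j. 1 \<le> j \<and> j < m \<longrightarrow> a j \<in> comp M (p - int j) (q - int j)"
    using inT_D[OF a(2)] by auto
  ultimately show "a0 \<in> Zset M m p q" using a unfolding Zset_def Rl_def by blast
qed

lemma Bset_eq: "Bset M (Suc c) p q = {Rl M b c | b. WBt M c (p + int c) (q + int c - 1) b}"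
proof -
  have e1: "(\<Sum>i<Suc c. sg i (dd M i (b (Suc c - 1 - i)))) = Rl M b c" for b :: "nat \<Rightarrow> 'a"
    by (simp add: Rl_def lessThan_Suc_atMost)
  have e2: "(\<forall>i<Suc c. b i \<in> comp M (p + int (Suc c) - 1 - int i) (q + int (Suc c) - 2 - int i))
     \<longleftrightarrow> inT M (Suc c) (p + int c) (q + int c - 1) b" for b :: "nat \<Rightarrow> 'a"
  proof -
    have "p + int (Suc c) - 1 - int i = p + int c - int i" "q + int (Suc c) - 2 - int i = q + int c - 1 - int i" for i
      by auto
    then show ?thesis by (simp add: inT_def)
  qed
  have e3: "(\<forall>l. l + 2 \<le> Suc c \<longrightarrow> (\<Sum>i\<le>l. sg i (dd M i (b (l - i)))) = 0) \<longleftrightarrow> (\<forall>l<c. Rl M b l = 0)"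
    for b :: "nat \<Rightarrow> 'a" by (auto simp: Rl_def)
  show ?thesis unfolding Bset_def WBt_def e1 e2 e3 by auto
qed

context fixes n :: enat and M :: "('r::comm_ring_1, 'a::ab_group_add) mcx"
  assumes mc: "is_mc n M"
begin

lemma Hom_ZW: "\<alpha> \<in> Hom (ZWp m p q) M \<longleftrightarrow> inW M m p q \<alpha>"
proof -
  have c: "(\<forall>g\<in>gens (ZWp m p q :: ('r, nat) pres). \<alpha> g \<in> comp M (fst (gdeg (ZWp m p q :: ('r, nat) pres) g)) (snd (gdeg (ZWp m p q :: ('r, nat) pres) g)))
     \<longleftrightarrow> inT M (max 1 m) p q \<alpha>"
    by (auto simp: ZWp_def inT_def)
  have r: "inT M (max 1 m) p q \<alpha> \<Longrightarrow> (\<forall>e\<in>rels (ZWp m p q :: ('r, nat) pres). evalx M \<alpha> e = 0) \<longleftrightarrow> (\<forall>l<m. Rl M \<alpha> l = 0)"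
  proof -
    assume a: "inT M (max 1 m) p q \<alpha>"
    have "k < m \<Longrightarrow> evalx M \<alpha> (zrel id k) = Rl M \<alpha> k" for k
      using evalx_zrel[OF mc, of k p q \<alpha> id] inT_mono[OF a, of "Suc k"] by simp
    then show ?thesis by (auto simp: ZWp_def)
  qed
  show ?thesis unfolding Hom_def inW_def using c r by blast
qed

lemma Hom_BW: "\<gamma> \<in> Hom (BWp (Suc c) p q') M \<longleftrightarrow>
   (WBt M c (p + int c) (q' + int c) (tb c \<gamma>) \<and> inT M c (p - 1) q' (\<lambda>k. \<gamma> (Cg k))
     \<and> (\<forall>l<c. Rl M (\<lambda>k. \<gamma> (Cg k)) l = 0))"
proof -
  let ?P = "BWp (Suc c) p q' :: ('r, bwgen) pres"
  have c: "(\<forall>g\<in>gens ?P. \<gamma> g \<in> comp M (fst (gdeg ?P g)) (snd (gdeg ?P g)))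
     \<longleftrightarrow> inT M (Suc c) (p + int c) (q' + int c) (tb c \<gamma>) \<and> inT M c (p - 1) q' (\<lambda>k. \<gamma> (Cg k))"
  proof -
    have "(\<forall>g\<in>gens ?P. \<gamma> g \<in> comp M (fst (gdeg ?P g)) (snd (gdeg ?P g)))
      \<longleftrightarrow> \<gamma> Eg \<in> comp M p q' \<and> (\<forall>j<c. \<gamma> (Bg j) \<in> comp M (p + int c - int j) (q' + int c - int j))
          \<and> (\<forall>j<c. \<gamma> (Cg j) \<in> comp M (p - 1 - int j) (q' - int j))"
    proof -
      have g: "gens ?P = {Eg} \<union> Bg ` {..<c} \<union> Cg ` {..<c}" by (simp add: BWp_def)
      have ball: "(\<forall>g\<in>{Eg} \<union> Bg ` {..<c} \<union> Cg ` {..<c}. Q g) \<longleftrightarrow> Q Eg \<and> (\<forall>j<c. Q (Bg j)) \<and> (\<forall>j<c. Q (Cg j))"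
        for Q by auto
      have e: "p + int (Suc c) - 1 - int j = p + int c - int j" "q' + int (Suc c) - 1 - int j = q' + int c - int j" for j
        by auto
      show ?thesis unfolding g ball by (simp add: BWp_def e)
    qed
    moreover have "inT M (Suc c) (p + int c) (q' + int c) (tb c \<gamma>) \<longleftrightarrow>
       \<gamma> Eg \<in> comp M p q' \<and> (\<forall>j<c. \<gamma> (Bg j) \<in> comp M (p + int c - int j) (q' + int c - int j))"
      by (auto simp: inT_def tb_def less_Suc_eq)
    ultimately show ?thesis by (simp add: inT_def)
  qed
  have r: "inT M (Suc c) (p + int c) (q' + int c) (tb c \<gamma>) \<Longrightarrow> inT M c (p - 1) q' (\<lambda>k. \<gamma> (Cg k)) \<Longrightarrow>
     (\<forall>e\<in>rels ?P. evalx M \<gamma> e = 0) \<longleftrightarrow> (\<forall>l<c. Rl M (tb c \<gamma>) l = 0) \<and> (\<forall>l<c. Rl M (\<lambda>k. \<gamma> (Cg k)) l = 0)"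
  proof -
    assume a: "inT M (Suc c) (p + int c) (q' + int c) (tb c \<gamma>)" and b: "inT M c (p - 1) q' (\<lambda>k. \<gamma> (Cg k))"
    have eB: "evalx M \<gamma> (zrel Bg k) = Rl M (tb c \<gamma>) k" if k: "k < c" for k
    proof -
      have "inT M (Suc k) (p + int c) (q' + int c) (\<lambda>j. \<gamma> (Bg j))"
        using inT_mono[OF a, of "Suc k"] k by (auto simp: inT_def tb_def)
      then have "evalx M \<gamma> (zrel Bg k) = Rl M (\<lambda>j. \<gamma> (Bg j)) k" by (rule evalx_zrel[OF mc])
      also have "\<dots> = Rl M (tb c \<gamma>) k" using k by (intro Rl_cong) (auto simp: tb_def)
      finally show ?thesis .
    qed
    have eC: "evalx M \<gamma> (zrel Cg k) = Rl M (\<lambda>j. \<gamma> (Cg j)) k" if k: "k < c" for k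
      using k by (intro evalx_zrel[OF mc, where P="p - 1" and Q=q'] inT_mono[OF b, of "Suc k"]) auto
    show ?thesis using eB eC by (auto simp: BWp_def)
  qed
  show ?thesis unfolding Hom_def WBt_def using c r by blast
qed

end



lemma WBt_cong: "(\<And>k. k \<le> c \<Longrightarrow> b k = b' k) \<Longrightarrow> WBt M c P Q b \<longleftrightarrow> WBt M c P Q b'"
proof -
  assume e: "\<And>k. k \<le> c \<Longrightarrow> b k = b' k"
  have "inT M (Suc c) P Q b \<longleftrightarrow> inT M (Suc c) P Q b'" using e by (auto simp: inT_def)
  moreover have "l < c \<Longrightarrow> Rl M b l = Rl M b' l" for l using e by (intro Rl_cong) auto
  ultimately show ?thesis by (auto simp: WBt_def)
qed

lemma yv_cong: "(\<And>k. k \<le> c \<Longrightarrow> b k = b' k) \<Longrightarrow> yv M c b j = yv M c b' j"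
proof -
  assume e: "\<And>k. k \<le> c \<Longrightarrow> b k = b' k"
  have "pad c b = pad c b'" using e by (auto simp: pad_def)
  then show ?thesis by (simp add: yv_def)
qed

lemma tb_le: "k \<le> c \<Longrightarrow> tb c (\<lambda>g. case g of Bg k \<Rightarrow> b k | Eg \<Rightarrow> b c | Cg k \<Rightarrow> h k) k = b k"
  by (auto simp: tb_def)

context fixes n :: enat and M :: "('r::comm_ring_1, 'a::ab_group_add) mcx"
  assumes mc: "is_mc n M"
begin

lemma yv_compN: "inT M (Suc c) (p + int c) (q + int c - 1) b \<Longrightarrow> yv M c b j \<in> comp M (p - int j) (q - int j)"
  using yv_comp[OF mc, of c "p + int c" "q + int c - 1" b j] by simp

lemma inT_yvN: "inT M (Suc c) (p + int c) (q + int c - 1) b \<Longrightarrow> inT M m p q (yv M c b)"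
  by (auto simp: inT_def intro: yv_compN)

lemma inW_yv: "WBt M c (p + int c) (q + int c - 1) b \<Longrightarrow> inW M (Suc c) p q (yv M c b)"
  unfolding inW_def WBt_def using inT_yvN yv_rel[OF mc] by auto

lemma cconstr: assumes a: "inW M (Suc c) p q a" and b: "WBt M c (p + int c) (q + int c - 1) b"
  and a0: "a 0 = Rl M b c"
  shows "inT M c (p - 1) (q - 1) (\<lambda>k. a (Suc k) - yv M c b (Suc k))"
    and "\<forall>l<c. Rl M (\<lambda>k. a (Suc k) - yv M c b (Suc k)) l = 0"
proof -
  have aT: "inT M (Suc c) p q a" using a by (simp add: inW_def)
  have bT: "inT M (Suc c) (p + int c) (q + int c - 1) b" using b by (simp add: WBt_def)
  have yT: "inT M m p q (yv M c b)" for m by (rule inT_yvN[OF bT])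
  have xT: "inT M (Suc c) p q (\<lambda>k. a k - yv M c b k)" by (rule inT_diff[OF mc aT yT])
  show "inT M c (p - 1) (q - 1) (\<lambda>k. a (Suc k) - yv M c b (Suc k))"
    unfolding inT_def
  proof (intro allI impI)
    fix k assume "k < c"
    then have "a (Suc k) - yv M c b (Suc k) \<in> comp M (p - int (Suc k)) (q - int (Suc k))"
      using inT_D[OF xT, of "Suc k"] by simp
    then show "a (Suc k) - yv M c b (Suc k) \<in> comp M (p - 1 - int k) (q - 1 - int k)"
      by (simp add: algebra_simps)
  qed
  show "\<forall>l<c. Rl M (\<lambda>k. a (Suc k) - yv M c b (Suc k)) l = 0"
  proof (intro allI impI)
    fix l assume l: "l < c"
    have x0: "a 0 - yv M c b 0 = 0" using a0 by (simp add: yv_0[OF mc])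
    have "Rl M (\<lambda>k. a (Suc k) - yv M c b (Suc k)) l = Rl M (\<lambda>k. a k - yv M c b k) (Suc l)"
      using Rl_Suc[OF mc, of "\<lambda>k. a k - yv M c b k" l] x0 by simp
    also have "\<dots> = Rl M a (Suc l) - Rl M (yv M c b) (Suc l)"
      using l by (intro Rl_diff[OF mc, where P=p and Q=q] inT_mono[OF aT] yT) auto
    also have "Rl M a (Suc l) = 0" using a l by (simp add: inW_def)
    also have "Rl M (yv M c b) (Suc l) = 0" using b by (intro yv_rel[OF mc bT]) (auto simp: WBt_def)
    finally show "Rl M (\<lambda>k. a (Suc k) - yv M c b (Suc k)) l = 0" by simp
  qed
qed

lemma Hom_BWN: "\<gamma> \<in> Hom (BWp (Suc c) p (q - 1)) M \<longleftrightarrow>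
   (WBt M c (p + int c) (q + int c - 1) (tb c \<gamma>) \<and> inT M c (p - 1) (q - 1) (\<lambda>k. \<gamma> (Cg k))
     \<and> (\<forall>l<c. Rl M (\<lambda>k. \<gamma> (Cg k)) l = 0))"
proof -
  have qe: "q - 1 + int c = q + int c - 1" by simp
  show ?thesis using Hom_BW[OF mc, of \<gamma> c p "q - 1"] unfolding qe .
qed

lemma evalx_iotaN: assumes h: "\<gamma> \<in> Hom (BWp (Suc c) p (q - 1)) M" and j: "j < Suc c"
  shows "evalx M \<gamma> (iota (Suc c) j) = yv M c (tb c \<gamma>) j + (if j = 0 then 0 else \<gamma> (Cg (j - 1)))"
proof -
  have w: "WBt M c (p + int c) (q + int c - 1) (tb c \<gamma>)" and ct: "inT M c (p - 1) (q - 1) (\<lambda>k. \<gamma> (Cg k))"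
    using h Hom_BWN by auto
  show ?thesis
  proof (rule evalx_iota[OF mc])
    show "inT M (Suc c) (p + int c) (q + int c - 1) (tb c \<gamma>)" using w by (simp add: WBt_def)
    show "0 < j \<Longrightarrow> \<gamma> (Cg (j - 1)) \<in> comp M (p - 1 - int (j - 1)) (q - 1 - int (j - 1))"
      using inT_D[OF ct, of "j - 1"] j by simp
  qed
qed

end



definition Star :: "('r::comm_ring_1, 'a::ab_group_add) mcx \<Rightarrow> ('r, 'b::ab_group_add) mcx \<Rightarrow> ('a \<Rightarrow> 'b) \<Rightarrow> nat \<Rightarrow> bool" where
  "Star A B f c \<longleftrightarrow> (\<forall>p q a0 b. a0 \<in> Zset A (Suc c) p q \<longrightarrow> WBt B c (p + int c) (q + int c - 1) b
     \<longrightarrow> f a0 = Rl B b c \<longrightarrow>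
     (\<exists>b''. WBt A c (p + int c) (q + int c - 1) b'' \<and> (\<forall>k\<le>c. f (b'' k) = b k) \<and> Rl A b'' c = a0))"

lemma gens_BW: "gens (BWp (Suc c) p q :: ('r::comm_ring_1, bwgen) pres) = {Eg} \<union> Bg ` {..<c} \<union> Cg ` {..<c}"
  by (simp add: BWp_def)
lemma gens_ZW: "gens (ZWp (Suc c) p q :: ('r::comm_ring_1, nat) pres) = {..<Suc c}"
  by (simp add: ZWp_def)

context fixes nA nB :: enat and A :: "('r::comm_ring_1, 'a::ab_group_add) mcx"
  and B :: "('r, 'b::ab_group_add) mcx" and f :: "'a \<Rightarrow> 'b"
  assumes mcA: "is_mc nA A" and mcB: "is_mc nB B" and hom: "mc_hom A B f"
begin

lemma inW_hom: "inW A m p q a \<Longrightarrow> inW B m p q (\<lambda>k. f (a k))"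
proof -
  assume h: "inW A m p q a"
  have t: "inT A (max 1 m) p q a" using h by (simp add: inW_def)
  have "inT B (max 1 m) p q (\<lambda>k. f (a k))" by (rule inT_hom[OF mcA mcB hom t])
  moreover have "\<forall>l<m. Rl B (\<lambda>k. f (a k)) l = 0"
  proof (intro allI impI)
    fix l assume l: "l < m"
    have "inT A (Suc l) p q a" using l by (intro inT_mono[OF t]) auto
    then have "f (Rl A a l) = Rl B (\<lambda>k. f (a k)) l" by (rule hom_Rl[OF mcA mcB hom])
    then show "Rl B (\<lambda>k. f (a k)) l = 0" using h l by (simp add: inW_def hom_zero[OF mcA mcB hom])
  qed
  ultimately show ?thesis by (simp add: inW_def)
qed

lemma WBt_hom: "WBt A c P Q b \<Longrightarrow> WBt B c P Q (\<lambda>k. f (b k))"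
proof -
  assume h: "WBt A c P Q b"
  have t: "inT A (Suc c) P Q b" using h by (simp add: WBt_def)
  have "inT B (Suc c) P Q (\<lambda>k. f (b k))" by (rule inT_hom[OF mcA mcB hom t])
  moreover have "\<forall>l<c. Rl B (\<lambda>k. f (b k)) l = 0"
  proof (intro allI impI)
    fix l assume l: "l < c"
    have "inT A (Suc l) P Q b" using l by (intro inT_mono[OF t]) auto
    then have "f (Rl A b l) = Rl B (\<lambda>k. f (b k)) l" by (rule hom_Rl[OF mcA mcB hom])
    then show "Rl B (\<lambda>k. f (b k)) l = 0" using h l by (simp add: WBt_def hom_zero[OF mcA mcB hom])
  qed
  ultimately show ?thesis by (simp add: WBt_def)
qed

lemma I_Star1: assumes I: "I_inj c A B f" shows "Star A B f c"
  unfolding Star_def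
proof (intro allI impI)
  fix p q a0 b
  assume a0Z: "a0 \<in> Zset A (Suc c) p q" and bW: "WBt B c (p + int c) (q + int c - 1) b" and fa0: "f a0 = Rl B b c"
  obtain a where aW: "inW A (Suc c) p q a" and a0: "a 0 = a0" using a0Z by (auto simp: Zset_eq)
  define \<beta> where "\<beta> = (\<lambda>g. case g of Bg k \<Rightarrow> b k | Eg \<Rightarrow> b c | Cg k \<Rightarrow> f (a (Suc k)) - yv B c b (Suc k))"
  have tb\<beta>: "\<And>k. k \<le> c \<Longrightarrow> tb c \<beta> k = b k" by (auto simp: \<beta>_def tb_def)
  have faW: "inW B (Suc c) p q (\<lambda>k. f (a k))" by (rule inW_hom[OF aW])
  have fa0': "(\<lambda>k. f (a k)) 0 = Rl B b c" using fa0 a0 by simp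
  note cc = cconstr[OF mcB faW bW fa0']
  have \<beta>H: "\<beta> \<in> Hom (BWp (Suc c) p (q - 1)) B"
    unfolding Hom_BWN[OF mcB]
  proof (intro conjI)
    show "WBt B c (p + int c) (q + int c - 1) (tb c \<beta>)" using bW WBt_cong[of c "tb c \<beta>" b] tb\<beta> by blast
    have e: "(\<lambda>k. \<beta> (Cg k)) = (\<lambda>k. f (a (Suc k)) - yv B c b (Suc k))" by (simp add: \<beta>_def)
    show "inT B c (p - 1) (q - 1) (\<lambda>k. \<beta> (Cg k))" unfolding e by (rule cc(1))
    show "\<forall>l<c. Rl B (\<lambda>k. \<beta> (Cg k)) l = 0" unfolding e by (rule cc(2))
  qed
  have \<alpha>H: "a \<in> Hom (ZWp (Suc c) p q) A" using aW by (simp add: Hom_ZW[OF mcA])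
  have comp1: "\<forall>g\<in>gens (ZWp (Suc c) p q :: ('r, nat) pres). f (a g) = evalx B \<beta> (iota (Suc c) g)"
  proof
    fix g assume "g \<in> gens (ZWp (Suc c) p q :: ('r, nat) pres)"
    then have g: "g < Suc c" by (simp add: gens_ZW)
    have "evalx B \<beta> (iota (Suc c) g) = yv B c (tb c \<beta>) g + (if g = 0 then 0 else \<beta> (Cg (g - 1)))"
      by (rule evalx_iotaN[OF mcB \<beta>H g])
    also have "yv B c (tb c \<beta>) g = yv B c b g" using tb\<beta> by (rule yv_cong)
    finally show "f (a g) = evalx B \<beta> (iota (Suc c) g)"
      using fa0' by (cases g) (auto simp: yv_0[OF mcB] \<beta>_def)
  qed
  obtain \<gamma> where \<gamma>H: "\<gamma> \<in> Hom (BWp (Suc c) p (q - 1)) A"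
    and \<gamma>1: "\<forall>g\<in>gens (ZWp (Suc c) p q :: ('r, nat) pres). evalx A \<gamma> (iota (Suc c) g) = a g"
    and \<gamma>2: "\<forall>h\<in>gens (BWp (Suc c) p (q - 1) :: ('r, bwgen) pres). f (\<gamma> h) = \<beta> h"
    using I \<alpha>H \<beta>H comp1 unfolding I_inj_def rlp_def by blast
  show "\<exists>b''. WBt A c (p + int c) (q + int c - 1) b'' \<and> (\<forall>k\<le>c. f (b'' k) = b k) \<and> Rl A b'' c = a0"
  proof (intro exI conjI allI impI)
    show "WBt A c (p + int c) (q + int c - 1) (tb c \<gamma>)" using \<gamma>H Hom_BWN[OF mcA] by blast
    fix k assume k: "k \<le> c"
    show "f (tb c \<gamma> k) = b k"
    proof (cases "k < c")
      case True
      then have "f (\<gamma> (Bg k)) = \<beta> (Bg k)" using \<gamma>2 by (simp add: gens_BW)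
      then show ?thesis using True by (simp add: tb_def \<beta>_def)
    next
      case False
      then have "k = c" using k by simp
      moreover have "f (\<gamma> Eg) = \<beta> Eg" using \<gamma>2 by (simp add: gens_BW)
      ultimately show ?thesis by (simp add: tb_def \<beta>_def)
    qed
  next
    have "evalx A \<gamma> (iota (Suc c) 0) = a 0" using \<gamma>1 by (simp add: gens_ZW)
    moreover have "evalx A \<gamma> (iota (Suc c) 0) = yv A c (tb c \<gamma>) 0"
      using evalx_iotaN[OF mcA \<gamma>H, of 0] by simp
    ultimately show "Rl A (tb c \<gamma>) c = a0" using a0 by (simp add: yv_0[OF mcA])
  qed
qed

lemma I_Star2: assumes S: "Star A B f c" shows "I_inj c A B f"
  unfolding I_inj_def rlp_def
proof (intro allI impI)
  fix p q \<alpha> \<beta>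
  assume \<alpha>H: "\<alpha> \<in> Hom (ZWp (Suc c) p q) A" and \<beta>H: "\<beta> \<in> Hom (BWp (Suc c) p (q - 1)) B"
    and cp: "\<forall>g\<in>gens (ZWp (Suc c) p q :: ('r, nat) pres). f (\<alpha> g) = evalx B \<beta> (iota (Suc c) g)"
  have aW: "inW A (Suc c) p q \<alpha>" using \<alpha>H by (simp add: Hom_ZW[OF mcA])
  have aT: "inT A (Suc c) p q \<alpha>" using aW by (simp add: inW_def)
  have bW: "WBt B c (p + int c) (q + int c - 1) (tb c \<beta>)" using \<beta>H Hom_BWN[OF mcB] by blast
  have cpj: "f (\<alpha> j) = yv B c (tb c \<beta>) j + (if j = 0 then 0 else \<beta> (Cg (j - 1)))" if "j < Suc c" for j
    using cp that evalx_iotaN[OF mcB \<beta>H that] by (simp add: gens_ZW)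
  have a0Z: "\<alpha> 0 \<in> Zset A (Suc c) p q" using aW by (auto simp: Zset_eq)
  have fa0: "f (\<alpha> 0) = Rl B (tb c \<beta>) c" using cpj[of 0] by (simp add: yv_0[OF mcB])
  obtain b'' where b''W: "WBt A c (p + int c) (q + int c - 1) b''" and fb: "\<forall>k\<le>c. f (b'' k) = tb c \<beta> k"
    and rb: "Rl A b'' c = \<alpha> 0"
    using S a0Z bW fa0 unfolding Star_def by blast
  have b''T: "inT A (Suc c) (p + int c) (q + int c - 1) b''" using b''W by (simp add: WBt_def)
  define \<gamma> where "\<gamma> = (\<lambda>g. case g of Bg k \<Rightarrow> b'' k | Eg \<Rightarrow> b'' c | Cg k \<Rightarrow> \<alpha> (Suc k) - yv A c b'' (Suc k))"
  have tb\<gamma>: "\<And>k. k \<le> c \<Longrightarrow> tb c \<gamma> k = b'' k" by (auto simp: \<gamma>_def tb_def)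
  note cc = cconstr[OF mcA aW b''W rb[symmetric]]
  have \<gamma>H: "\<gamma> \<in> Hom (BWp (Suc c) p (q - 1)) A"
    unfolding Hom_BWN[OF mcA]
  proof (intro conjI)
    show "WBt A c (p + int c) (q + int c - 1) (tb c \<gamma>)" using b''W WBt_cong[of c "tb c \<gamma>" b''] tb\<gamma> by blast
    have e: "(\<lambda>k. \<gamma> (Cg k)) = (\<lambda>k. \<alpha> (Suc k) - yv A c b'' (Suc k))" by (simp add: \<gamma>_def)
    show "inT A c (p - 1) (q - 1) (\<lambda>k. \<gamma> (Cg k))" unfolding e by (rule cc(1))
    show "\<forall>l<c. Rl A (\<lambda>k. \<gamma> (Cg k)) l = 0" unfolding e by (rule cc(2))
  qed
  show "\<exists>\<gamma>\<in>Hom (BWp (Suc c) p (q - 1)) A.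
            (\<forall>g\<in>gens (ZWp (Suc c) p q :: ('r, nat) pres). evalx A \<gamma> (iota (Suc c) g) = \<alpha> g) \<and>
            (\<forall>h\<in>gens (BWp (Suc c) p (q - 1) :: ('r, bwgen) pres). f (\<gamma> h) = \<beta> h)"
  proof (intro bexI conjI ballI)
    show "\<gamma> \<in> Hom (BWp (Suc c) p (q - 1)) A" by (rule \<gamma>H)
    fix g assume "g \<in> gens (ZWp (Suc c) p q :: ('r, nat) pres)"
    then have g: "g < Suc c" by (simp add: gens_ZW)
    have "evalx A \<gamma> (iota (Suc c) g) = yv A c (tb c \<gamma>) g + (if g = 0 then 0 else \<gamma> (Cg (g - 1)))"
      by (rule evalx_iotaN[OF mcA \<gamma>H g])
    also have "yv A c (tb c \<gamma>) g = yv A c b'' g" using tb\<gamma> by (rule yv_cong)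
    finally show "evalx A \<gamma> (iota (Suc c) g) = \<alpha> g"
      using rb by (cases g) (auto simp: yv_0[OF mcA] \<gamma>_def)
  next
    fix h assume "h \<in> gens (BWp (Suc c) p (q - 1) :: ('r, bwgen) pres)"
    then consider "h = Eg" | k where "k < c" "h = Bg k" | k where "k < c" "h = Cg k"
      by (auto simp: gens_BW)
    then show "f (\<gamma> h) = \<beta> h"
    proof cases
      case 1 then show ?thesis using fb by (auto simp: \<gamma>_def tb_def)
    next
      case (2 k) then show ?thesis using fb by (auto simp: \<gamma>_def tb_def)
    next
      case (3 k)
      have ak: "\<alpha> (Suc k) \<in> comp A (p - int (Suc k)) (q - int (Suc k))" using inT_D[OF aT, of "Suc k"] 3 by simp
      have yk: "yv A c b'' (Suc k) \<in> comp A (p - int (Suc k)) (q - int (Suc k))" by (rule yv_compN[OF mcA b''T])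
      have "f (\<gamma> h) = f (\<alpha> (Suc k)) - f (yv A c b'' (Suc k))"
        using 3 by (simp add: \<gamma>_def hom_diff[OF mcA mcB hom ak yk])
      also have "f (yv A c b'' (Suc k)) = yv B c (\<lambda>k. f (b'' k)) (Suc k)" by (rule hom_yv[OF mcA mcB hom b''T])
      also have "\<dots> = yv B c (tb c \<beta>) (Suc k)" using fb by (intro yv_cong) auto
      finally show ?thesis using cpj[of "Suc k"] 3 by simp
    qed
  qed
qed

end



context fixes n :: enat and M :: "('r::comm_ring_1, 'a::ab_group_add) mcx"
  assumes mc: "is_mc n M"
begin

lemma inW_add: "inW M m p q x \<Longrightarrow> inW M m p q y \<Longrightarrow> inW M m p q (\<lambda>k. x k + y k)"
proof -
  assume hx: "inW M m p q x" and hy: "inW M m p q y"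
  have tx: "inT M (max 1 m) p q x" using hx by (simp add: inW_def)
  have ty: "inT M (max 1 m) p q y" using hy by (simp add: inW_def)
  have "inT M (max 1 m) p q (\<lambda>k. x k + y k)" by (rule inT_add[OF mc tx ty])
  moreover have "\<forall>l<m. Rl M (\<lambda>k. x k + y k) l = 0"
  proof (intro allI impI)
    fix l assume l: "l < m"
    have "Rl M (\<lambda>k. x k + y k) l = Rl M x l + Rl M y l"
      using l by (intro Rl_add[OF mc, where P=p and Q=q] inT_mono[OF tx] inT_mono[OF ty]) auto
    moreover have "Rl M x l = 0" "Rl M y l = 0" using hx hy l by (simp_all add: inW_def)
    ultimately show "Rl M (\<lambda>k. x k + y k) l = 0" by simp
  qed
  ultimately show ?thesis by (simp add: inW_def)
qed

lemma inW_diff: "inW M m p q x \<Longrightarrow> inW M m p q y \<Longrightarrow> inW M m p q (\<lambda>k. x k - y k)"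
proof -
  assume hx: "inW M m p q x" and hy: "inW M m p q y"
  have tx: "inT M (max 1 m) p q x" using hx by (simp add: inW_def)
  have ty: "inT M (max 1 m) p q y" using hy by (simp add: inW_def)
  have "inT M (max 1 m) p q (\<lambda>k. x k - y k)" by (rule inT_diff[OF mc tx ty])
  moreover have "\<forall>l<m. Rl M (\<lambda>k. x k - y k) l = 0"
  proof (intro allI impI)
    fix l assume l: "l < m"
    have "Rl M (\<lambda>k. x k - y k) l = Rl M x l - Rl M y l"
      using l by (intro Rl_diff[OF mc, where P=p and Q=q] inT_mono[OF tx] inT_mono[OF ty]) auto
    moreover have "Rl M x l = 0" "Rl M y l = 0" using hx hy l by (simp_all add: inW_def)
    ultimately show "Rl M (\<lambda>k. x k - y k) l = 0" by simp
  qed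
  ultimately show ?thesis by (simp add: inW_def)
qed

lemma inW_zero: "inW M m p q (\<lambda>k. 0)"
  by (simp add: inW_def inT_zero[OF mc] Rl_zero[OF mc])

lemma inW_comp0: "inW M m p q x \<Longrightarrow> x 0 \<in> comp M p q"
  unfolding inW_def using inT_D[of M "max 1 m" p q x 0] by simp

lemma WBt_add: "WBt M c P Q x \<Longrightarrow> WBt M c P Q y \<Longrightarrow> WBt M c P Q (\<lambda>k. x k + y k)"
proof -
  assume hx: "WBt M c P Q x" and hy: "WBt M c P Q y"
  have tx: "inT M (Suc c) P Q x" using hx by (simp add: WBt_def)
  have ty: "inT M (Suc c) P Q y" using hy by (simp add: WBt_def)
  have "inT M (Suc c) P Q (\<lambda>k. x k + y k)" by (rule inT_add[OF mc tx ty])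
  moreover have "\<forall>l<c. Rl M (\<lambda>k. x k + y k) l = 0"
  proof (intro allI impI)
    fix l assume l: "l < c"
    have "Rl M (\<lambda>k. x k + y k) l = Rl M x l + Rl M y l"
      using l by (intro Rl_add[OF mc, where P=P and Q=Q] inT_mono[OF tx] inT_mono[OF ty]) auto
    moreover have "Rl M x l = 0" "Rl M y l = 0" using hx hy l by (simp_all add: WBt_def)
    ultimately show "Rl M (\<lambda>k. x k + y k) l = 0" by simp
  qed
  ultimately show ?thesis by (simp add: WBt_def)
qed

lemma WBt_diff: "WBt M c P Q x \<Longrightarrow> WBt M c P Q y \<Longrightarrow> WBt M c P Q (\<lambda>k. x k - y k)"
proof -
  assume hx: "WBt M c P Q x" and hy: "WBt M c P Q y"
  have tx: "inT M (Suc c) P Q x" using hx by (simp add: WBt_def)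
  have ty: "inT M (Suc c) P Q y" using hy by (simp add: WBt_def)
  have "inT M (Suc c) P Q (\<lambda>k. x k - y k)" by (rule inT_diff[OF mc tx ty])
  moreover have "\<forall>l<c. Rl M (\<lambda>k. x k - y k) l = 0"
  proof (intro allI impI)
    fix l assume l: "l < c"
    have "Rl M (\<lambda>k. x k - y k) l = Rl M x l - Rl M y l"
      using l by (intro Rl_diff[OF mc, where P=P and Q=Q] inT_mono[OF tx] inT_mono[OF ty]) auto
    moreover have "Rl M x l = 0" "Rl M y l = 0" using hx hy l by (simp_all add: WBt_def)
    ultimately show "Rl M (\<lambda>k. x k - y k) l = 0" by simp
  qed
  ultimately show ?thesis by (simp add: WBt_def)
qed

lemma WBt_zero: "WBt M c P Q (\<lambda>k. 0)"
  by (simp add: WBt_def inT_zero[OF mc] Rl_zero[OF mc])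

lemma WBt_Rl_comp: "WBt M c (p + int c) (q + int c - 1) b \<Longrightarrow> Rl M b c \<in> comp M p q"
  using Rl_comp[OF mc, of c "p + int c" "q + int c - 1" b] by (simp add: WBt_def)

lemma WBt_Rl_add: "WBt M c P Q x \<Longrightarrow> WBt M c P Q y \<Longrightarrow> Rl M (\<lambda>k. x k + y k) c = Rl M x c + Rl M y c"
  unfolding WBt_def by (intro Rl_add[OF mc, where P=P and Q=Q]) auto

lemma WBt_Rl_diff: "WBt M c P Q x \<Longrightarrow> WBt M c P Q y \<Longrightarrow> Rl M (\<lambda>k. x k - y k) c = Rl M x c - Rl M y c"
  unfolding WBt_def by (intro Rl_diff[OF mc, where P=P and Q=Q]) auto

lemma Zset_zero: "0 \<in> Zset M m p q"
proof -
  have "\<exists>x. (0::'a) = x 0 \<and> inW M m p q x" by (rule exI[of _ "\<lambda>k. 0"]) (simp add: inW_zero)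
  then show ?thesis unfolding Zset_eq by simp
qed

lemma Zset_diff: "z1 \<in> Zset M m p q \<Longrightarrow> z2 \<in> Zset M m p q \<Longrightarrow> z1 - z2 \<in> Zset M m p q"
proof -
  assume "z1 \<in> Zset M m p q" "z2 \<in> Zset M m p q"
  then obtain x y where x: "inW M m p q x" "x 0 = z1" and y: "inW M m p q y" "y 0 = z2"
    unfolding Zset_eq by blast
  have "inW M m p q (\<lambda>k. x k - y k)" by (rule inW_diff[OF x(1) y(1)])
  then have "\<exists>w. z1 - z2 = w 0 \<and> inW M m p q w" using x y by (intro exI[of _ "\<lambda>k. x k - y k"]) simp
  then show ?thesis unfolding Zset_eq by simp
qed

lemma Zset_comp: "z \<in> Zset M m p q \<Longrightarrow> z \<in> comp M p q"
proof -
  assume "z \<in> Zset M m p q"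
  then obtain x where x: "inW M m p q x" "x 0 = z" unfolding Zset_eq by blast
  show ?thesis using inW_comp0[OF x(1)] x(2) by simp
qed

lemma Bset_zero: "0 \<in> Bset M (Suc c) p q"
proof -
  have "WBt M c (p + int c) (q + int c - 1) (\<lambda>k. 0)" by (rule WBt_zero)
  then have "Rl M (\<lambda>k. 0) c \<in> {Rl M b c | b. WBt M c (p + int c) (q + int c - 1) b}" by blast
  then show ?thesis unfolding Bset_eq by (simp add: Rl_zero[OF mc])
qed

lemma Bset_add: "b1 \<in> Bset M (Suc c) p q \<Longrightarrow> b2 \<in> Bset M (Suc c) p q \<Longrightarrow> b1 + b2 \<in> Bset M (Suc c) p q"
proof -
  assume "b1 \<in> Bset M (Suc c) p q" "b2 \<in> Bset M (Suc c) p q"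
  then obtain x y where x: "WBt M c (p + int c) (q + int c - 1) x" "b1 = Rl M x c"
    and y: "WBt M c (p + int c) (q + int c - 1) y" "b2 = Rl M y c"
    unfolding Bset_eq by blast
  have w: "WBt M c (p + int c) (q + int c - 1) (\<lambda>k. x k + y k)" by (rule WBt_add[OF x(1) y(1)])
  have "Rl M (\<lambda>k. x k + y k) c = b1 + b2" using WBt_Rl_add[OF x(1) y(1)] x(2) y(2) by simp
  then have "\<exists>b. b1 + b2 = Rl M b c \<and> WBt M c (p + int c) (q + int c - 1) b"
    using w by (intro exI[of _ "\<lambda>k. x k + y k"]) simp
  then show ?thesis unfolding Bset_eq by simp
qed

lemma Bset_diff: "b1 \<in> Bset M (Suc c) p q \<Longrightarrow> b2 \<in> Bset M (Suc c) p q \<Longrightarrow> b1 - b2 \<in> Bset M (Suc c) p q"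
proof -
  assume "b1 \<in> Bset M (Suc c) p q" "b2 \<in> Bset M (Suc c) p q"
  then obtain x y where x: "WBt M c (p + int c) (q + int c - 1) x" "b1 = Rl M x c"
    and y: "WBt M c (p + int c) (q + int c - 1) y" "b2 = Rl M y c"
    unfolding Bset_eq by blast
  have w: "WBt M c (p + int c) (q + int c - 1) (\<lambda>k. x k - y k)" by (rule WBt_diff[OF x(1) y(1)])
  have "Rl M (\<lambda>k. x k - y k) c = b1 - b2" using WBt_Rl_diff[OF x(1) y(1)] x(2) y(2) by simp
  then have "\<exists>b. b1 - b2 = Rl M b c \<and> WBt M c (p + int c) (q + int c - 1) b"
    using w by (intro exI[of _ "\<lambda>k. x k - y k"]) simp
  then show ?thesis unfolding Bset_eq by simp
qed

lemma Bset_comp: "x \<in> Bset M (Suc c) p q \<Longrightarrow> x \<in> comp M p q"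
proof -
  assume "x \<in> Bset M (Suc c) p q"
  then obtain b where b: "WBt M c (p + int c) (q + int c - 1) b" "x = Rl M b c" unfolding Bset_eq by blast
  show ?thesis using WBt_Rl_comp[OF b(1)] b(2) by simp
qed

lemma coset_eq: "coset_of M (Suc c) p q z1 = coset_of M (Suc c) p q z2 \<longleftrightarrow> z1 - z2 \<in> Bset M (Suc c) p q"
proof
  assume e: "coset_of M (Suc c) p q z1 = coset_of M (Suc c) p q z2"
  have "z1 \<in> coset_of M (Suc c) p q z1" unfolding coset_of_def using Bset_zero by force
  then obtain b where "b \<in> Bset M (Suc c) p q" "z1 = z2 + b" using e unfolding coset_of_def by auto
  then show "z1 - z2 \<in> Bset M (Suc c) p q" by (simp add: algebra_simps)
next
  assume d: "z1 - z2 \<in> Bset M (Suc c) p q"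
  show "coset_of M (Suc c) p q z1 = coset_of M (Suc c) p q z2"
  proof (intro set_eqI iffI)
    fix x assume "x \<in> coset_of M (Suc c) p q z1"
    then obtain b where b: "b \<in> Bset M (Suc c) p q" "x = z1 + b" unfolding coset_of_def by auto
    have "x = z2 + ((z1 - z2) + b)" using b by (simp add: algebra_simps)
    moreover have "(z1 - z2) + b \<in> Bset M (Suc c) p q" by (rule Bset_add[OF d b(1)])
    ultimately show "x \<in> coset_of M (Suc c) p q z2" unfolding coset_of_def by blast
  next
    fix x assume "x \<in> coset_of M (Suc c) p q z2"
    then obtain b where b: "b \<in> Bset M (Suc c) p q" "x = z2 + b" unfolding coset_of_def by auto
    have "x = z1 + (b - (z1 - z2))" using b by (simp add: algebra_simps)
    moreover have "b - (z1 - z2) \<in> Bset M (Suc c) p q" by (rule Bset_diff[OF b(1) d])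
    ultimately show "x \<in> coset_of M (Suc c) p q z1" unfolding coset_of_def by blast
  qed
qed

end



context fixes nA nB :: enat and A :: "('r::comm_ring_1, 'a::ab_group_add) mcx"
  and B :: "('r, 'b::ab_group_add) mcx" and f :: "'a \<Rightarrow> 'b"
  assumes mcA: "is_mc nA A" and mcB: "is_mc nB B" and hom: "mc_hom A B f"
begin

lemma Zset_hom: "z \<in> Zset A m p q \<Longrightarrow> f z \<in> Zset B m p q"
proof -
  assume "z \<in> Zset A m p q"
  then obtain x where x: "inW A m p q x" "x 0 = z" unfolding Zset_eq by blast
  have "\<exists>y. f z = y 0 \<and> inW B m p q y"
    using inW_hom[OF mcA mcB hom x(1)] x(2) by (intro exI[of _ "\<lambda>k. f (x k)"]) simp
  then show ?thesis unfolding Zset_eq by simp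
qed

lemma Bset_hom: "x \<in> Bset A (Suc c) p q \<Longrightarrow> f x \<in> Bset B (Suc c) p q"
proof -
  assume "x \<in> Bset A (Suc c) p q"
  then obtain b where b: "WBt A c (p + int c) (q + int c - 1) b" "x = Rl A b c" by (auto simp: Bset_eq)
  have bT: "inT A (Suc c) (p + int c) (q + int c - 1) b" using b(1) by (simp add: WBt_def)
  have "f x = Rl B (\<lambda>k. f (b k)) c" using hom_Rl[OF mcA mcB hom bT] b(2) by simp
  then have "\<exists>b'. f x = Rl B b' c \<and> WBt B c (p + int c) (q + int c - 1) b'"
    using WBt_hom[OF mcA mcB hom b(1)] by (intro exI[of _ "\<lambda>k. f (b k)"]) simp
  then show ?thesis unfolding Bset_eq by simp
qed

lemma Emap_coset: assumes z: "z \<in> Zset A (Suc c) p q"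
  shows "Emap A B f (Suc c) p q (coset_of A (Suc c) p q z) = coset_of B (Suc c) p q (f z)"
proof -
  let ?z = "SOME z'. z' \<in> Zset A (Suc c) p q \<and> coset_of A (Suc c) p q z = coset_of A (Suc c) p q z'"
  have "\<exists>z'. z' \<in> Zset A (Suc c) p q \<and> coset_of A (Suc c) p q z = coset_of A (Suc c) p q z'" using z by blast
  then have z'': "?z \<in> Zset A (Suc c) p q \<and> coset_of A (Suc c) p q z = coset_of A (Suc c) p q ?z"
    by (rule someI_ex)
  then have z': "?z \<in> Zset A (Suc c) p q" "coset_of A (Suc c) p q z = coset_of A (Suc c) p q ?z"
    by simp_all
  then have "z - ?z \<in> Bset A (Suc c) p q" by (simp add: coset_eq[OF mcA])
  then have "f (z - ?z) \<in> Bset B (Suc c) p q" by (rule Bset_hom)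
  moreover have "f (z - ?z) = f z - f ?z"
    by (rule hom_diff[OF mcA mcB hom Zset_comp[OF mcA z] Zset_comp[OF mcA z'(1)]])
  ultimately have "coset_of B (Suc c) p q (f z) = coset_of B (Suc c) p q (f ?z)" by (simp add: coset_eq[OF mcB])
  then show ?thesis by (simp add: Emap_def)
qed

lemma E_iff: "E_qiso A B f c \<longleftrightarrow>
   (\<forall>p q z. z \<in> Zset A (Suc c) p q \<longrightarrow> f z \<in> Bset B (Suc c) p q \<longrightarrow> z \<in> Bset A (Suc c) p q) \<and>
   (\<forall>p q w. w \<in> Zset B (Suc c) p q \<longrightarrow> (\<exists>z\<in>Zset A (Suc c) p q. w - f z \<in> Bset B (Suc c) p q))"
  (is "?L \<longleftrightarrow> ?I \<and> ?S")
proof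
  assume L: ?L
  show "?I \<and> ?S"
  proof
    show ?I
    proof (intro allI impI)
      fix p q z assume z: "z \<in> Zset A (Suc c) p q" and fz: "f z \<in> Bset B (Suc c) p q"
      have bij: "bij_betw (Emap A B f (Suc c) p q) (Eset A (Suc c) p q) (Eset B (Suc c) p q)"
        using L by (simp add: E_qiso_def)
      have z0: "(0::'a) \<in> Zset A (Suc c) p q" by (rule Zset_zero[OF mcA])
      have "Emap A B f (Suc c) p q (coset_of A (Suc c) p q z) = Emap A B f (Suc c) p q (coset_of A (Suc c) p q 0)"
        using fz by (simp add: Emap_coset[OF z] Emap_coset[OF z0] coset_eq[OF mcB] hom_zero[OF mcA mcB hom])
      moreover have "coset_of A (Suc c) p q z \<in> Eset A (Suc c) p q" "coset_of A (Suc c) p q 0 \<in> Eset A (Suc c) p q"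
        using z z0 by (auto simp: Eset_def)
      ultimately have "coset_of A (Suc c) p q z = coset_of A (Suc c) p q 0"
        using bij by (auto simp: bij_betw_def inj_on_def)
      then show "z \<in> Bset A (Suc c) p q" by (simp add: coset_eq[OF mcA])
    qed
    show ?S
    proof (intro allI impI)
      fix p q w assume w: "w \<in> Zset B (Suc c) p q"
      have bij: "bij_betw (Emap A B f (Suc c) p q) (Eset A (Suc c) p q) (Eset B (Suc c) p q)"
        using L by (simp add: E_qiso_def)
      have "coset_of B (Suc c) p q w \<in> Eset B (Suc c) p q" using w by (auto simp: Eset_def)
      then have "coset_of B (Suc c) p q w \<in> Emap A B f (Suc c) p q ` Eset A (Suc c) p q"
        using bij by (simp add: bij_betw_def)
      then obtain z where z: "z \<in> Zset A (Suc c) p q"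
        and e: "coset_of B (Suc c) p q w = Emap A B f (Suc c) p q (coset_of A (Suc c) p q z)"
        by (auto simp: Eset_def)
      have "coset_of B (Suc c) p q w = coset_of B (Suc c) p q (f z)" using e by (simp add: Emap_coset[OF z])
      then show "\<exists>z\<in>Zset A (Suc c) p q. w - f z \<in> Bset B (Suc c) p q"
        using z by (auto simp: coset_eq[OF mcB])
    qed
  qed
next
  assume R: "?I \<and> ?S"
  show ?L unfolding E_qiso_def bij_betw_def
  proof (intro allI conjI)
    fix p q
    show "inj_on (Emap A B f (Suc c) p q) (Eset A (Suc c) p q)"
    proof (rule inj_onI)
      fix X Y assume "X \<in> Eset A (Suc c) p q" "Y \<in> Eset A (Suc c) p q"
        and e: "Emap A B f (Suc c) p q X = Emap A B f (Suc c) p q Y"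
      then obtain z1 z2 where z: "z1 \<in> Zset A (Suc c) p q" "z2 \<in> Zset A (Suc c) p q"
        and X: "X = coset_of A (Suc c) p q z1" and Y: "Y = coset_of A (Suc c) p q z2"
        by (auto simp: Eset_def)
      have "coset_of B (Suc c) p q (f z1) = coset_of B (Suc c) p q (f z2)"
        using e X Y by (simp add: Emap_coset z)
      then have "f z1 - f z2 \<in> Bset B (Suc c) p q" by (simp add: coset_eq[OF mcB])
      moreover have "f (z1 - z2) = f z1 - f z2"
        by (rule hom_diff[OF mcA mcB hom Zset_comp[OF mcA z(1)] Zset_comp[OF mcA z(2)]])
      moreover have "z1 - z2 \<in> Zset A (Suc c) p q" by (rule Zset_diff[OF mcA z])
      ultimately have "z1 - z2 \<in> Bset A (Suc c) p q" using R by auto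
      then show "X = Y" using X Y by (simp add: coset_eq[OF mcA])
    qed
    show "Emap A B f (Suc c) p q ` Eset A (Suc c) p q = Eset B (Suc c) p q"
    proof (intro set_eqI iffI)
      fix Y assume "Y \<in> Emap A B f (Suc c) p q ` Eset A (Suc c) p q"
      then obtain z where z: "z \<in> Zset A (Suc c) p q" and Y: "Y = Emap A B f (Suc c) p q (coset_of A (Suc c) p q z)"
        by (auto simp: Eset_def)
      then show "Y \<in> Eset B (Suc c) p q" using Zset_hom[OF z] by (auto simp: Emap_coset[OF z] Eset_def)
    next
      fix Y assume "Y \<in> Eset B (Suc c) p q"
      then obtain w where w: "w \<in> Zset B (Suc c) p q" and Y: "Y = coset_of B (Suc c) p q w" by (auto simp: Eset_def)
      obtain z where z: "z \<in> Zset A (Suc c) p q" and d: "w - f z \<in> Bset B (Suc c) p q" using R w by blast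
      have "Y = Emap A B f (Suc c) p q (coset_of A (Suc c) p q z)"
        using d Y by (simp add: Emap_coset[OF z] coset_eq[OF mcB])
      then show "Y \<in> Emap A B f (Suc c) p q ` Eset A (Suc c) p q" using z by (auto simp: Eset_def)
    qed
  qed
qed

lemma J_iff: "J_inj m A B f \<longleftrightarrow>
   (\<forall>P Q x. inW B m P Q x \<longrightarrow> (\<exists>y. inW A m P Q y \<and> (\<forall>j<max 1 m. f (y j) = x j)))"
proof -
  have H0: "Hom zero_pres A = UNIV" by (auto simp: Hom_def zero_pres_def)
  have G0: "gens (zero_pres :: ('r, nat) pres) = {}" by (simp add: zero_pres_def)
  have GZ: "gens (ZWp m p q :: ('r, nat) pres) = {..<max 1 m}" for p q by (simp add: ZWp_def)
  show ?thesis unfolding J_inj_def rlp_def H0 G0 GZ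
    by (simp add: Bex_def Ball_def Hom_ZW[OF mcA] Hom_ZW[OF mcB] lessThan_iff)
qed

end



context fixes n :: enat and M :: "('r::comm_ring_1, 'a::ab_group_add) mcx"
  assumes mc: "is_mc n M"
begin

lemma shiftW: assumes x: "inW M (Suc c) P Q x" and x0: "x 0 = 0" and c: "0 < c"
  shows "inW M c (P - 1) (Q - 1) (\<lambda>k. x (Suc k))"
  unfolding inW_def
proof (intro conjI allI impI)
  have xT: "inT M (Suc c) P Q x" using x by (simp add: inW_def)
  show "inT M (max 1 c) (P - 1) (Q - 1) (\<lambda>k. x (Suc k))" unfolding inT_def
  proof (intro allI impI)
    fix k assume "k < max 1 c"
    then have "Suc k < Suc c" using c by simp
    then have "x (Suc k) \<in> comp M (P - int (Suc k)) (Q - int (Suc k))" by (rule inT_D[OF xT])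
    then show "x (Suc k) \<in> comp M (P - 1 - int k) (Q - 1 - int k)" by (simp add: algebra_simps)
  qed
  fix l assume "l < c"
  then have "Rl M x (Suc l) = 0" using x by (simp add: inW_def)
  then show "Rl M (\<lambda>k. x (Suc k)) l = 0" using Rl_Suc[OF mc, of x l] x0 by simp
qed

lemma unshiftW: assumes x: "inW M c (P - 1) (Q - 1) x" and c: "0 < c"
  shows "inW M (Suc c) P Q (\<lambda>k. if k = 0 then 0 else x (k - 1))"
  unfolding inW_def
proof (intro conjI allI impI)
  have xT: "inT M c (P - 1) (Q - 1) x" using x c by (simp add: inW_def max_def)
  show "inT M (max 1 (Suc c)) P Q (\<lambda>k. if k = 0 then 0 else x (k - 1))" unfolding inT_def
  proof (intro allI impI)
    fix k assume k: "k < max 1 (Suc c)"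
    show "(if k = 0 then 0 else x (k - 1)) \<in> comp M (P - int k) (Q - int k)"
    proof (cases k)
      case 0 then show ?thesis by (simp add: mc_zero[OF mc])
    next
      case (Suc i)
      then have "i < c" using k by simp
      then have "x i \<in> comp M (P - 1 - int i) (Q - 1 - int i)" by (rule inT_D[OF xT])
      then show ?thesis using Suc by (simp add: algebra_simps)
    qed
  qed
  fix l assume l: "l < Suc c"
  show "Rl M (\<lambda>k. if k = 0 then 0 else x (k - 1)) l = 0"
  proof (cases l)
    case 0 then show ?thesis by (simp add: Rl_def mc_dd_0[OF mc])
  next
    case (Suc l')
    then have "l' < c" using l by simp
    then have "Rl M x l' = 0" using x by (simp add: inW_def)
    then show ?thesis using Suc Rl_Suc[OF mc, of "\<lambda>k. if k = 0 then 0 else x (k - 1)" l'] by simp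
  qed
qed

end

definition WsSurj :: "('r::comm_ring_1, 'a::ab_group_add) mcx \<Rightarrow> ('r, 'b::ab_group_add) mcx \<Rightarrow> ('a \<Rightarrow> 'b) \<Rightarrow> nat \<Rightarrow> bool" where
  "WsSurj A B f c \<longleftrightarrow> (\<forall>P Q x. inW B (Suc c) P Q x \<longrightarrow> (\<exists>y. inW A (Suc c) P Q y \<and> (\<forall>j<Suc c. f (y j) = x j)))"
definition WBSurj :: "('r::comm_ring_1, 'a::ab_group_add) mcx \<Rightarrow> ('r, 'b::ab_group_add) mcx \<Rightarrow> ('a \<Rightarrow> 'b) \<Rightarrow> nat \<Rightarrow> bool" where
  "WBSurj A B f c \<longleftrightarrow> (\<forall>P Q b. WBt B c P Q b \<longrightarrow> (\<exists>b''. WBt A c P Q b'' \<and> (\<forall>k\<le>c. f (b'' k) = b k)))"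
definition Jsurj :: "('r::comm_ring_1, 'a::ab_group_add) mcx \<Rightarrow> ('r, 'b::ab_group_add) mcx \<Rightarrow> ('a \<Rightarrow> 'b) \<Rightarrow> nat \<Rightarrow> bool" where
  "Jsurj A B f m \<longleftrightarrow> (\<forall>P Q x. inW B m P Q x \<longrightarrow> (\<exists>y. inW A m P Q y \<and> (\<forall>j<max 1 m. f (y j) = x j)))"

lemma StarD: assumes S: "Star A B f c" and a0: "a0 \<in> Zset A (Suc c) (P - int c) (Q + 1 - int c)"
  and b: "WBt B c P Q b" and fa: "f a0 = Rl B b c"
  shows "\<exists>b''. WBt A c P Q b'' \<and> (\<forall>k\<le>c. f (b'' k) = b k) \<and> Rl A b'' c = a0"
proof -
  have e1: "P - int c + int c = P" and e2: "Q + 1 - int c + int c - 1 = Q" by simp_all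
  show ?thesis
  proof -
    have "\<forall>p q a0 b. a0 \<in> Zset A (Suc c) p q \<longrightarrow> WBt B c (p + int c) (q + int c - 1) b
     \<longrightarrow> f a0 = Rl B b c \<longrightarrow>
     (\<exists>b''. WBt A c (p + int c) (q + int c - 1) b'' \<and> (\<forall>k\<le>c. f (b'' k) = b k) \<and> Rl A b'' c = a0)"
      using S unfolding Star_def .
    then have "a0 \<in> Zset A (Suc c) (P - int c) (Q + 1 - int c) \<longrightarrow> WBt B c (P - int c + int c) (Q + 1 - int c + int c - 1) b
     \<longrightarrow> f a0 = Rl B b c \<longrightarrow>
     (\<exists>b''. WBt A c (P - int c + int c) (Q + 1 - int c + int c - 1) b'' \<and> (\<forall>k\<le>c. f (b'' k) = b k) \<and> Rl A b'' c = a0)"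
      by blast
    then show ?thesis unfolding e1 e2 using a0 b fa by blast
  qed
qed

context fixes nA nB :: enat and A :: "('r::comm_ring_1, 'a::ab_group_add) mcx"
  and B :: "('r, 'b::ab_group_add) mcx" and f :: "'a \<Rightarrow> 'b"
  assumes mcA: "is_mc nA A" and mcB: "is_mc nB B" and hom: "mc_hom A B f"
begin

lemma S_Ws: assumes S: "Star A B f c" shows "WsSurj A B f c"
  unfolding WsSurj_def
proof (intro allI impI)
  fix P Q x assume x: "inW B (Suc c) P Q x"
  have xW: "WBt B c P Q x" using x by (simp add: inW_def WBt_def)
  have z: "0 \<in> Zset A (Suc c) (P - int c) (Q + 1 - int c)" by (rule Zset_zero[OF mcA])
  have "f 0 = Rl B x c" using x by (simp add: inW_def hom_zero[OF mcA mcB hom])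
  then obtain b'' where b'': "WBt A c P Q b''" "\<forall>k\<le>c. f (b'' k) = x k" "Rl A b'' c = 0"
    using StarD[OF S z xW] by blast
  have "inW A (Suc c) P Q b''" using b'' by (auto simp: inW_def WBt_def less_Suc_eq)
  then show "\<exists>y. inW A (Suc c) P Q y \<and> (\<forall>j<Suc c. f (y j) = x j)" using b''(2) by auto
qed

lemma S_WB: assumes S: "Star A B f c" and W: "WsSurj A B f c" shows "WBSurj A B f c"
  unfolding WBSurj_def
proof (intro allI impI)
  fix P Q b assume b: "WBt B c P Q b"
  define p where "p = P - int c"
  define q where "q = Q + 1 - int c"
  have bW: "WBt B c (p + int c) (q + int c - 1) b" using b by (simp add: p_def q_def)
  have yW: "inW B (Suc c) p q (yv B c b)" by (rule inW_yv[OF mcB bW])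
  obtain y where y: "inW A (Suc c) p q y" "\<forall>j<Suc c. f (y j) = yv B c b j"
    using W yW unfolding WsSurj_def by blast
  have z: "y 0 \<in> Zset A (Suc c) (P - int c) (Q + 1 - int c)" using y(1) by (auto simp: Zset_eq p_def q_def)
  have "f (y 0) = Rl B b c" using y(2) by (simp add: yv_0[OF mcB])
  then show "\<exists>b''. WBt A c P Q b'' \<and> (\<forall>k\<le>c. f (b'' k) = b k)" using StarD[OF S z b] by blast
qed

lemma WB_J0: assumes W: "WBSurj A B f c" shows "Jsurj A B f 0"
  unfolding Jsurj_def
proof (intro allI impI)
  fix P Q x assume x: "inW B 0 P Q x"
  have x0: "x 0 \<in> comp B P Q" using inW_comp0[OF mcB x] .
  define b where "b = (\<lambda>k. if k = c then x 0 else 0)"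
  have bW: "WBt B c (P + int c) (Q + int c) b" unfolding WBt_def
  proof (intro conjI allI impI)
    show "inT B (Suc c) (P + int c) (Q + int c) b" unfolding inT_def
      using x0 by (auto simp: b_def mc_zero[OF mcB])
    fix l assume "l < c"
    then have "Rl B b l = Rl B (\<lambda>k. 0) l" by (intro Rl_cong) (auto simp: b_def)
    then show "Rl B b l = 0" by (simp add: Rl_zero[OF mcB])
  qed
  obtain b'' where b'': "WBt A c (P + int c) (Q + int c) b''" "\<forall>k\<le>c. f (b'' k) = b k"
    using W bW unfolding WBSurj_def by blast
  have bT: "inT A (Suc c) (P + int c) (Q + int c) b''" using b''(1) by (simp add: WBt_def)
  have "b'' c \<in> comp A (P + int c - int c) (Q + int c - int c)"
    by (rule inT_D[OF bT]) simp
  then have "inW A 0 P Q (\<lambda>k. b'' c)" by (simp add: inW_def inT_def)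
  moreover have "f (b'' c) = x 0" using b''(2) by (simp add: b_def)
  ultimately show "\<exists>y. inW A 0 P Q y \<and> (\<forall>j<max 1 0. f (y j) = x j)" by auto
qed

lemma WB_Jc: assumes W: "WBSurj A B f c" shows "Jsurj A B f c"
proof (cases "c = 0")
  case True then show ?thesis using WB_J0[OF W] by simp
next
  case False
  show ?thesis unfolding Jsurj_def
  proof (intro allI impI)
    fix P Q x assume x: "inW B c P Q x"
    have xT: "inT B c P Q x" using x False by (simp add: inW_def max_def)
    define b where "b = (\<lambda>k. if k < c then x k else 0)"
    have bW: "WBt B c P Q b" unfolding WBt_def
    proof (intro conjI allI impI)
      show "inT B (Suc c) P Q b" unfolding inT_def
        using inT_D[OF xT] by (auto simp: b_def mc_zero[OF mcB])
      fix l assume l: "l < c"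
      then have "Rl B b l = Rl B x l" by (intro Rl_cong) (auto simp: b_def)
      then show "Rl B b l = 0" using x l by (simp add: inW_def)
    qed
    obtain b'' where b'': "WBt A c P Q b''" "\<forall>k\<le>c. f (b'' k) = b k"
      using W bW unfolding WBSurj_def by blast
    have "inW A c P Q b''" using b''(1) False by (auto simp: inW_def WBt_def max_def intro: inT_mono)
    moreover have "\<forall>j<max 1 c. f (b'' j) = x j" using b''(2) False by (auto simp: b_def max_def)
    ultimately show "\<exists>y. inW A c P Q y \<and> (\<forall>j<max 1 c. f (y j) = x j)" by blast
  qed
qed

lemma S_Einj: assumes S: "Star A B f c" and z: "z \<in> Zset A (Suc c) p q" and fz: "f z \<in> Bset B (Suc c) p q"
  shows "z \<in> Bset A (Suc c) p q"
proof -
  obtain b where b: "WBt B c (p + int c) (q + int c - 1) b" "f z = Rl B b c" using fz by (auto simp: Bset_eq)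
  then obtain b'' where "WBt A c (p + int c) (q + int c - 1) b''" "Rl A b'' c = z"
    using S z unfolding Star_def by blast
  then show ?thesis by (auto simp: Bset_eq)
qed

lemma Ws_Esurj: assumes W: "WsSurj A B f c" and w: "w \<in> Zset B (Suc c) p q"
  shows "\<exists>z\<in>Zset A (Suc c) p q. w - f z \<in> Bset B (Suc c) p q"
proof -
  obtain x where x: "inW B (Suc c) p q x" "x 0 = w" using w by (auto simp: Zset_eq)
  obtain y where y: "inW A (Suc c) p q y" "\<forall>j<Suc c. f (y j) = x j" using W x(1) unfolding WsSurj_def by blast
  have "y 0 \<in> Zset A (Suc c) p q" using y(1) by (auto simp: Zset_eq)
  moreover have "w - f (y 0) = 0" using y(2) x(2) by simp
  ultimately show ?thesis using Bset_zero[OF mcB, of c p q] by (intro bexI[of _ "y 0"]) simp_all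
qed

lemma J_WB: assumes J0: "Jsurj A B f 0" and Jc: "Jsurj A B f c" shows "WBSurj A B f c"
  unfolding WBSurj_def
proof (intro allI impI)
  fix P Q b assume b: "WBt B c P Q b"
  have bT: "inT B (Suc c) P Q b" using b by (simp add: WBt_def)
  have bc: "inW B 0 (P - int c) (Q - int c) (\<lambda>k. b c)" using inT_D[OF bT, of c] by (simp add: inW_def inT_def)
  obtain e where e: "inW A 0 (P - int c) (Q - int c) e" "f (e 0) = b c" using J0 bc unfolding Jsurj_def by fastforce
  have ec: "e 0 \<in> comp A (P - int c) (Q - int c)" by (rule inW_comp0[OF mcA e(1)])
  show "\<exists>b''. WBt A c P Q b'' \<and> (\<forall>k\<le>c. f (b'' k) = b k)"
  proof (cases "c = 0")
    case True
    have "WBt A c P Q (\<lambda>k. e 0)" using ec True by (simp add: WBt_def inT_def)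
    then show ?thesis using e(2) True by auto
  next
    case False
    have bW: "inW B c P Q b" using b False by (auto simp: inW_def WBt_def max_def intro: inT_mono)
    obtain y where y: "inW A c P Q y" "\<forall>j<max 1 c. f (y j) = b j" using Jc bW unfolding Jsurj_def by blast
    define b'' where "b'' = (\<lambda>k. if k < c then y k else e 0)"
    have "WBt A c P Q b''" unfolding WBt_def
    proof (intro conjI allI impI)
      have yT: "inT A c P Q y" using y(1) False by (simp add: inW_def max_def)
      show "inT A (Suc c) P Q b''" unfolding inT_def
      proof (intro allI impI)
        fix k assume k: "k < Suc c"
        show "b'' k \<in> comp A (P - int k) (Q - int k)"
        proof (cases "k < c")
          case True then show ?thesis using inT_D[OF yT, of k] by (simp add: b''_def)
        next
          case False then have "k = c" using k by simp
          then show ?thesis using ec by (simp add: b''_def)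
        qed
      qed
      fix l assume l: "l < c"
      then have "Rl A b'' l = Rl A y l" by (intro Rl_cong) (auto simp: b''_def)
      then show "Rl A b'' l = 0" using y(1) l by (simp add: inW_def)
    qed
    moreover have "\<forall>k\<le>c. f (b'' k) = b k" using y(2) e(2) False by (auto simp: b''_def max_def)
    ultimately show ?thesis by blast
  qed
qed

lemma E_Ws: assumes Ei: "\<And>p q z. z \<in> Zset A (Suc c) p q \<Longrightarrow> f z \<in> Bset B (Suc c) p q \<Longrightarrow> z \<in> Bset A (Suc c) p q"
  and Es: "\<And>p q w. w \<in> Zset B (Suc c) p q \<Longrightarrow> \<exists>z\<in>Zset A (Suc c) p q. w - f z \<in> Bset B (Suc c) p q"
  and WB: "WBSurj A B f c" and Jc: "Jsurj A B f c"
  shows "WsSurj A B f c"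
  unfolding WsSurj_def
proof (intro allI impI)
  fix P Q v assume v: "inW B (Suc c) P Q v"
  have v0: "v 0 \<in> Zset B (Suc c) P Q" using v by (auto simp: Zset_eq)
  obtain z where z: "z \<in> Zset A (Suc c) P Q" and d: "v 0 - f z \<in> Bset B (Suc c) P Q" using Es[OF v0] by blast
  obtain zh where zh: "inW A (Suc c) P Q zh" "zh 0 = z" using z by (auto simp: Zset_eq)
  obtain b where b: "WBt B c (P + int c) (Q + int c - 1) b" "v 0 - f z = Rl B b c" using d by (auto simp: Bset_eq)
  obtain bt where bt: "WBt A c (P + int c) (Q + int c - 1) bt" "\<forall>k\<le>c. f (bt k) = b k"
    using WB b(1) unfolding WBSurj_def by blast
  have btT: "inT A (Suc c) (P + int c) (Q + int c - 1) bt" using bt(1) by (simp add: WBt_def)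
  have y'W: "inW A (Suc c) P Q (yv A c bt)" by (rule inW_yv[OF mcA bt(1)])
  have fy': "f (yv A c bt j) = yv B c b j" for j
  proof -
    have "f (yv A c bt j) = yv B c (\<lambda>k. f (bt k)) j" by (rule hom_yv[OF mcA mcB hom btT])
    also have "\<dots> = yv B c b j" using bt(2) by (intro yv_cong) auto
    finally show ?thesis .
  qed
  define u where "u = (\<lambda>k. zh k + yv A c bt k)"
  have uW: "inW A (Suc c) P Q u" unfolding u_def by (rule inW_add[OF mcA zh(1) y'W])
  have uT: "inT A (Suc c) P Q u" using uW by (simp add: inW_def)
  have fuW: "inW B (Suc c) P Q (\<lambda>k. f (u k))" by (rule inW_hom[OF mcA mcB hom uW])
  have fu0: "f (u 0) = v 0"
  proof -
    have "f (u 0) = f z + f (yv A c bt 0)"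
      unfolding u_def using zh(2) inW_comp0[OF mcA zh(1)] inW_comp0[OF mcA y'W]
      by (simp add: hom_add[OF mcA mcB hom])
    also have "f (yv A c bt 0) = Rl B b c" using fy'[of 0] by (simp add: yv_0[OF mcB])
    finally show ?thesis using b(2) by (simp add: algebra_simps)
  qed
  define x where "x = (\<lambda>k. v k - f (u k))"
  have xW: "inW B (Suc c) P Q x" unfolding x_def by (rule inW_diff[OF mcB v fuW])
  have x0: "x 0 = 0" using fu0 by (simp add: x_def)
  show "\<exists>y. inW A (Suc c) P Q y \<and> (\<forall>j<Suc c. f (y j) = v j)"
  proof (cases "c = 0")
    case True
    then show ?thesis using uW fu0 by auto
  next
    case False
    then have c0: "0 < c" by simp
    have x'W: "inW B c (P - 1) (Q - 1) (\<lambda>k. x (Suc k))" by (rule shiftW[OF mcB xW x0 c0])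
    obtain x'' where x'': "inW A c (P - 1) (Q - 1) x''" "\<forall>j<max 1 c. f (x'' j) = x (Suc j)"
      using Jc x'W unfolding Jsurj_def by blast
    define w where "w = (\<lambda>k. if k = 0 then 0 else x'' (k - 1))"
    have wW: "inW A (Suc c) P Q w" unfolding w_def by (rule unshiftW[OF mcA x''(1) c0])
    have wT: "inT A (Suc c) P Q w" using wW by (simp add: inW_def)
    have "inW A (Suc c) P Q (\<lambda>k. u k + w k)" by (rule inW_add[OF mcA uW wW])
    moreover have "\<forall>j<Suc c. f (u j + w j) = v j"
    proof (intro allI impI)
      fix j assume j: "j < Suc c"
      have "f (u j + w j) = f (u j) + f (w j)"
        using inT_D[OF uT j] inT_D[OF wT j] by (rule hom_add[OF mcA mcB hom])
      also have "f (w j) = x j"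
      proof (cases j)
        case 0 then show ?thesis using x0 by (simp add: w_def hom_zero[OF mcA mcB hom])
      next
        case (Suc i)
        then have "i < max 1 c" using j by simp
        then show ?thesis using x''(2) Suc by (simp add: w_def)
      qed
      finally show "f (u j + w j) = v j" by (simp add: x_def)
    qed
    ultimately show ?thesis by blast
  qed
qed

lemma E_Star: assumes Ei: "\<And>p q z. z \<in> Zset A (Suc c) p q \<Longrightarrow> f z \<in> Bset B (Suc c) p q \<Longrightarrow> z \<in> Bset A (Suc c) p q"
  and W: "WsSurj A B f c"
  shows "Star A B f c"
  unfolding Star_def
proof (intro allI impI)
  fix p q a0 b
  assume a0Z: "a0 \<in> Zset A (Suc c) p q" and bW: "WBt B c (p + int c) (q + int c - 1) b" and fa0: "f a0 = Rl B b c"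
  have "f a0 \<in> Bset B (Suc c) p q" using bW fa0 by (auto simp: Bset_eq)
  then have "a0 \<in> Bset A (Suc c) p q" by (rule Ei[OF a0Z])
  then obtain u where u: "WBt A c (p + int c) (q + int c - 1) u" "a0 = Rl A u c" by (auto simp: Bset_eq)
  have uT: "inT A (Suc c) (p + int c) (q + int c - 1) u" using u(1) by (simp add: WBt_def)
  define v where "v = (\<lambda>k. b k - f (u k))"
  have vW: "WBt B c (p + int c) (q + int c - 1) v" unfolding v_def
    by (rule WBt_diff[OF mcB bW WBt_hom[OF mcA mcB hom u(1)]])
  have "Rl B v c = Rl B b c - Rl B (\<lambda>k. f (u k)) c" unfolding v_def
    by (rule WBt_Rl_diff[OF mcB bW WBt_hom[OF mcA mcB hom u(1)]])
  also have "Rl B (\<lambda>k. f (u k)) c = f a0" using u(2) hom_Rl[OF mcA mcB hom uT] by simp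
  finally have rv: "Rl B v c = 0" using fa0 by simp
  have "inW B (Suc c) (p + int c) (q + int c - 1) v"
    using vW rv by (auto simp: inW_def WBt_def less_Suc_eq)
  then obtain v'' where v'': "inW A (Suc c) (p + int c) (q + int c - 1) v''" "\<forall>j<Suc c. f (v'' j) = v j"
    using W unfolding WsSurj_def by blast
  have v''W: "WBt A c (p + int c) (q + int c - 1) v''" using v''(1) by (simp add: inW_def WBt_def)
  have v''T: "inT A (Suc c) (p + int c) (q + int c - 1) v''" using v''W by (simp add: WBt_def)
  show "\<exists>b''. WBt A c (p + int c) (q + int c - 1) b'' \<and> (\<forall>k\<le>c. f (b'' k) = b k) \<and> Rl A b'' c = a0"
  proof (intro exI conjI allI impI)
    show "WBt A c (p + int c) (q + int c - 1) (\<lambda>k. u k + v'' k)" by (rule WBt_add[OF mcA u(1) v''W])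
    fix k assume k: "k \<le> c"
    then have k': "k < Suc c" by simp
    have "f (u k + v'' k) = f (u k) + f (v'' k)"
      using inT_D[OF uT k'] inT_D[OF v''T k'] by (rule hom_add[OF mcA mcB hom])
    then show "f (u k + v'' k) = b k" using v''(2) k' by (simp add: v_def)
  next
    have "Rl A (\<lambda>k. u k + v'' k) c = Rl A u c + Rl A v'' c" by (rule WBt_Rl_add[OF mcA u(1) v''W])
    then show "Rl A (\<lambda>k. u k + v'' k) c = a0" using u(2) v''(1) by (simp add: inW_def)
  qed
qed

end


theorem mainTheorem7:
  fixes n :: enat and r :: nat
    and A :: "('r::comm_ring_1, 'a::ab_group_add) mcx"
    and B :: "('r, 'b::ab_group_add) mcx"
    and f :: "'a \<Rightarrow> 'b"
  assumes "2 \<le> n"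
    and "is_mc n A" and "is_mc n B" and "mc_hom A B f"
  shows "I_inj r A B f \<longleftrightarrow> (E_qiso A B f r \<and> J_inj 0 A B f \<and> J_inj r A B f)"
proof -
  note mcA = assms(2) and mcB = assms(3) and hom = assms(4)
  have J: "J_inj m A B f \<longleftrightarrow> Jsurj A B f m" for m
    unfolding J_iff[OF mcA mcB hom] Jsurj_def ..
  have IS: "I_inj r A B f \<longleftrightarrow> Star A B f r"
  proof
    assume "I_inj r A B f" then show "Star A B f r" by (rule I_Star1[OF mcA mcB hom])
  next
    assume "Star A B f r" then show "I_inj r A B f" by (rule I_Star2[OF mcA mcB hom])
  qed
  show ?thesis
  proof
    assume "I_inj r A B f"
    then have S: "Star A B f r" using IS by (simp only:)
    have W: "WsSurj A B f r" by (rule S_Ws[OF mcA mcB hom S])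
    have WB: "WBSurj A B f r" by (rule S_WB[OF mcA mcB hom S W])
    have "E_qiso A B f r"
      unfolding E_iff[OF mcA mcB hom]
    proof (intro conjI allI impI)
      fix p q z assume "z \<in> Zset A (Suc r) p q" "f z \<in> Bset B (Suc r) p q"
      then show "z \<in> Bset A (Suc r) p q" by (rule S_Einj[OF mcA mcB hom S])
    next
      fix p q w assume "w \<in> Zset B (Suc r) p q"
      then show "\<exists>z\<in>Zset A (Suc r) p q. w - f z \<in> Bset B (Suc r) p q" by (rule Ws_Esurj[OF mcA mcB hom W])
    qed
    moreover have "J_inj 0 A B f" unfolding J by (rule WB_J0[OF mcA mcB hom WB])
    moreover have "J_inj r A B f" unfolding J by (rule WB_Jc[OF mcA mcB hom WB])
    ultimately show "E_qiso A B f r \<and> J_inj 0 A B f \<and> J_inj r A B f" by (intro conjI)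
  next
    assume R: "E_qiso A B f r \<and> J_inj 0 A B f \<and> J_inj r A B f"
    have Eq: "E_qiso A B f r" using R by (rule conjunct1)
    have Ei: "\<forall>p q z. z \<in> Zset A (Suc r) p q \<longrightarrow> f z \<in> Bset B (Suc r) p q \<longrightarrow> z \<in> Bset A (Suc r) p q"
      and Es: "\<forall>p q w. w \<in> Zset B (Suc r) p q \<longrightarrow> (\<exists>z\<in>Zset A (Suc r) p q. w - f z \<in> Bset B (Suc r) p q)"
      using Eq unfolding E_iff[OF mcA mcB hom] by (rule conjunct1, rule conjunct2)
    have J0: "Jsurj A B f 0" using R J[of 0] by (simp only:)
    have Jr: "Jsurj A B f r" using R J[of r] by (simp only:)
    have WB: "WBSurj A B f r" by (rule J_WB[OF mcA mcB hom J0 Jr])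
    have W: "WsSurj A B f r"
    proof (rule E_Ws[OF mcA mcB hom _ _ WB Jr])
      fix p q z assume "z \<in> Zset A (Suc r) p q" "f z \<in> Bset B (Suc r) p q"
      then show "z \<in> Bset A (Suc r) p q" using Ei by blast
    next
      fix p q w assume "w \<in> Zset B (Suc r) p q"
      then show "\<exists>z\<in>Zset A (Suc r) p q. w - f z \<in> Bset B (Suc r) p q" using Es by blast
    qed
    have "Star A B f r"
    proof (rule E_Star[OF mcA mcB hom _ W])
      fix p q z assume "z \<in> Zset A (Suc r) p q" "f z \<in> Bset B (Suc r) p q"
      then show "z \<in> Bset A (Suc r) p q" using Ei by blast
    qed
    then show "I_inj r A B f" using IS by (simp only:)
  qed
qed

end
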